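(* On $\mathcal{P}(\mathbb{R}^{2m},\mathbb{C})\cap\ker(\Delta_x,\Delta_u)$, $$AC=\frac{H_x+H_xH_u+H_u}{(H_x+1)(H_u+1)}\,CA-(H_x+H_u)+\frac{S_xS_u}{H_x+1}+\frac{S_uS_x}{H_u+1}.$$
   Context: Fix an integer $m>4$. For $x,u\in\mathbb{R}^m$ let $\mathcal{P}(\mathbb{R}^{2m},\mathbb{C})$ be complex polynomials in $(x,u)$, $\mathcal{P}_{p,q}$ those of bidegree $(p,q)$. Write $|x|^2=\sum x_j^2$, $\langle u,x\rangle=\sum u_jx_j$, $\Delta_x=\sum\partial_{x_j}^2$, $\Delta_u=\sum\partial_{u_j}^2$, $\langle\partial_u,\partial_x\rangle=\sum\partial_{u_j}\partial_{x_j}$, $\langle x,\partial_u\rangle=\sum x_j\partial_{u_j}$, $\langle u,\partial_x\rangle=\sum u_j\partial_{x_j}$, $\mathbb{E}_x=\sum x_j\partial_{x_j}$, $\mathbb{E}_u=\sum u_j\partial_{u_j}$, $H_x=-(\mathbb{E}_x+\frac m2)$, $H_u=-(\mathbb{E}_u+\frac m2)$, $\ker(D_1,\dots,D_r)=\bigcap\ker D_i$. Every $P\in\mathcal{P}_{p,q}$ is uniquely $\sum_{a,b\ge0}|x|^{2a}|u|^{2b}H'_{p-2a,q-2b}$ with $H'_{p-2a,q-2b}\in\mathcal{P}_{p-2a,q-2b}\cap\ker(\Delta_x,\Delta_u)$; $\pi_{\mathfrak{s}}P:=H'_{p,q}$. On $\ker(\Delta_x,\Delta_u)$: $S_x=\pi_{\mathfrak{s}}\langle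 x,\partial_u\rangle$, $S_u=\pi_{\mathfrak{s}}\langle u,\partial_x\rangle$, $A=\pi_{\mathfrak{s}}\langle\partial_u,\partial_x\rangle$, $C=\pi_{\mathfrak{s}}\langle u,x\rangle$. Convention: a quotient $T/G$ with $G$ polynomial in $H_x,H_u$ means $G^{-1}T$; rational functions of $H_x,H_u$ (written to the left or as denominators) are evaluated at the eigenvalues of $H_x,H_u$ on the bihomogeneous output of the operator product. *)

theory Defs
  imports Complex_Main
begin

text \<open>Complex polynomials in x_1..x_m, u_1..u_m are represented by their coefficient
  functions: P alpha beta is the coefficient of the monomial x^alpha u^beta.\<close>

type_synonym cpoly = "(nat \<Rightarrow> nat) \<Rightarrow> (nat \<Rightarrow> nat) \<Rightarrow> complex"

definition is_poly :: "nat \<Rightarrow> cpoly \<Rightarrow> bool" where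
  "is_poly m P \<longleftrightarrow> finite {(\<alpha>, \<beta>). P \<alpha> \<beta> \<noteq> 0} \<and>
     (\<forall>\<alpha> \<beta>. P \<alpha> \<beta> \<noteq> 0 \<longrightarrow> (\<forall>i\<ge>m. \<alpha> i = 0 \<and> \<beta> i = 0))"

definition zero_poly :: cpoly where "zero_poly = (\<lambda>\<alpha> \<beta>. 0)"

definition mulx :: "nat \<Rightarrow> cpoly \<Rightarrow> cpoly" where
  "mulx j P = (\<lambda>\<alpha> \<beta>. if \<alpha> j = 0 then 0 else P (\<alpha>(j := \<alpha> j - 1)) \<beta>)"
definition mulu :: "nat \<Rightarrow> cpoly \<Rightarrow> cpoly" where
  "mulu j P = (\<lambda>\<alpha> \<beta>. if \<beta> j = 0 then 0 else P \<alpha> (\<beta>(j := \<beta> j - 1)))"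

definition dx :: "nat \<Rightarrow> cpoly \<Rightarrow> cpoly" where
  "dx j P = (\<lambda>\<alpha> \<beta>. of_nat (\<alpha> j + 1) * P (\<alpha>(j := \<alpha> j + 1)) \<beta>)"
definition du :: "nat \<Rightarrow> cpoly \<Rightarrow> cpoly" where
  "du j P = (\<lambda>\<alpha> \<beta>. of_nat (\<beta> j + 1) * P \<alpha> (\<beta>(j := \<beta> j + 1)))"

definition lap_x :: "nat \<Rightarrow> cpoly \<Rightarrow> cpoly" where
  "lap_x m P = (\<lambda>\<alpha> \<beta>. \<Sum>j<m. dx j (dx j P) \<alpha> \<beta>)"
definition lap_u :: "nat \<Rightarrow> cpoly \<Rightarrow> cpoly" where
  "lap_u m P = (\<lambda>\<alpha> \<beta>. \<Sum>j<m. du j (du j P) \<alpha> \<beta>)"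

definition harm :: "nat \<Rightarrow> cpoly \<Rightarrow> bool" where
  "harm m P \<longleftrightarrow> lap_x m P = zero_poly \<and> lap_u m P = zero_poly"

definition norm2x :: "nat \<Rightarrow> cpoly \<Rightarrow> cpoly" where
  "norm2x m P = (\<lambda>\<alpha> \<beta>. \<Sum>j<m. mulx j (mulx j P) \<alpha> \<beta>)"
definition norm2u :: "nat \<Rightarrow> cpoly \<Rightarrow> cpoly" where
  "norm2u m P = (\<lambda>\<alpha> \<beta>. \<Sum>j<m. mulu j (mulu j P) \<alpha> \<beta>)"

text \<open>pi_s: the component H'_{0,0} of the (unique) decomposition
  P = sum_{a,b} |x|^{2a} |u|^{2b} H'_{a,b} with H'_{a,b} in ker(Delta_x,Delta_u).
  (Applied bihomogeneous-componentwise this is exactly the paper's pi_s.)\<close>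
definition pis :: "nat \<Rightarrow> cpoly \<Rightarrow> cpoly" where
  "pis m P = (THE H. \<exists>N (Hf :: nat \<Rightarrow> nat \<Rightarrow> cpoly).
      (\<forall>a b. is_poly m (Hf a b) \<and> harm m (Hf a b)) \<and>
      (\<forall>a b. N \<le> a \<or> N \<le> b \<longrightarrow> Hf a b = zero_poly) \<and>
      P = (\<lambda>\<alpha> \<beta>. \<Sum>a<N. \<Sum>b<N. ((norm2x m ^^ a) ((norm2u m ^^ b) (Hf a b))) \<alpha> \<beta>) \<and>
      H = Hf 0 0)"

definition Sx :: "nat \<Rightarrow> cpoly \<Rightarrow> cpoly" where
  "Sx m P = pis m (\<lambda>\<alpha> \<beta>. \<Sum>j<m. mulx j (du j P) \<alpha> \<beta>)"
definition Su :: "nat \<Rightarrow> cpoly \<Rightarrow> cpoly" where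
  "Su m P = pis m (\<lambda>\<alpha> \<beta>. \<Sum>j<m. mulu j (dx j P) \<alpha> \<beta>)"
definition Aop :: "nat \<Rightarrow> cpoly \<Rightarrow> cpoly" where
  "Aop m P = pis m (\<lambda>\<alpha> \<beta>. \<Sum>j<m. du j (dx j P) \<alpha> \<beta>)"
definition Cop :: "nat \<Rightarrow> cpoly \<Rightarrow> cpoly" where
  "Cop m P = pis m (\<lambda>\<alpha> \<beta>. \<Sum>j<m. mulu j (mulx j P) \<alpha> \<beta>)"

text \<open>f(H_x,H_u) acting on a polynomial: on the monomial x^alpha u^beta,
  H_x = -(|alpha| + m/2) and H_u = -(|beta| + m/2).\<close>
definition diagop :: "nat \<Rightarrow> (complex \<Rightarrow> complex \<Rightarrow> complex) \<Rightarrow> cpoly \<Rightarrow> cpoly" where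
  "diagop m f P = (\<lambda>\<alpha> \<beta>. f (- (of_nat (\<Sum>i<m. \<alpha> i) + of_nat m / 2))
                            (- (of_nat (\<Sum>i<m. \<beta> i) + of_nat m / 2)) * P \<alpha> \<beta>)"

end

theory Submission
  imports Defs "HOL-Library.Function_Algebras"
begin


definition sc :: "complex \<Rightarrow> cpoly \<Rightarrow> cpoly" where "sc k F = (\<lambda>\<alpha> \<beta>. k * F \<alpha> \<beta>)"

definition sop :: "nat \<Rightarrow> (nat \<Rightarrow> cpoly \<Rightarrow> cpoly) \<Rightarrow> cpoly \<Rightarrow> cpoly" where
  "sop m f F = (\<lambda>\<alpha> \<beta>. \<Sum>j<m. f j F \<alpha> \<beta>)"

definition lin :: "(cpoly \<Rightarrow> cpoly) \<Rightarrow> bool" where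
  "lin Op \<longleftrightarrow> (\<forall>F G. Op (F + G) = Op F + Op G) \<and> (\<forall>k F. Op (sc k F) = sc k (Op F))"

lemma lin_add: "lin Op \<Longrightarrow> Op (F + G) = Op F + Op G" by (simp add: lin_def)
lemma lin_sc: "lin Op \<Longrightarrow> Op (sc k F) = sc k (Op F)" by (simp add: lin_def)
lemma sc0: "sc 0 F = 0" by (simp add: sc_def fun_eq_iff)
lemma lin_zero: "lin Op \<Longrightarrow> Op 0 = 0"
  using lin_sc[of Op 0 0] by (simp add: sc0)
lemma minus_sc: "F - G = F + sc (-1) G" by (simp add: sc_def fun_eq_iff)
lemma lin_minus: "lin Op \<Longrightarrow> Op (F - G) = Op F - Op G"
  by (simp only: minus_sc lin_add lin_sc)
lemma lin_sum: assumes "lin Op" "finite J"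
  shows "Op (\<lambda>\<alpha> \<beta>. \<Sum>j\<in>J. G j \<alpha> \<beta>) = (\<lambda>\<alpha> \<beta>. \<Sum>j\<in>J. Op (G j) \<alpha> \<beta>)"
  using assms(2)
proof (induction J rule: finite_induct)
  case empty
  then show ?case using lin_zero[OF assms(1)] by (simp add: zero_fun_def)
next
  case (insert x J)
  have "(\<lambda>\<alpha> \<beta>. \<Sum>j\<in>insert x J. G j \<alpha> \<beta>) = G x + (\<lambda>\<alpha> \<beta>. \<Sum>j\<in>J. G j \<alpha> \<beta>)"
    using insert by (simp add: fun_eq_iff)
  then have "Op (\<lambda>\<alpha> \<beta>. \<Sum>j\<in>insert x J. G j \<alpha> \<beta>) = Op (G x) + (\<lambda>\<alpha> \<beta>. \<Sum>j\<in>J. Op (G j) \<alpha> \<beta>)"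
    using insert.IH lin_add[OF assms(1)] by simp
  then show ?case using insert by (simp add: fun_eq_iff)
qed

lemma lin_comp: "lin Op1 \<Longrightarrow> lin Op2 \<Longrightarrow> lin (\<lambda>F. Op1 (Op2 F))"
  by (simp add: lin_def)
lemma lin_sop: "(\<And>j. lin (f j)) \<Longrightarrow> lin (sop m f)"
  by (simp add: lin_def sop_def fun_eq_iff sc_def sum.distrib sum_distrib_left)

lemma lin_dx: "lin (dx j)" by (simp add: lin_def fun_eq_iff dx_def sc_def algebra_simps)
lemma lin_du: "lin (du j)" by (simp add: lin_def fun_eq_iff du_def sc_def algebra_simps)
lemma lin_mulx: "lin (mulx j)" by (simp add: lin_def fun_eq_iff mulx_def sc_def)
lemma lin_mulu: "lin (mulu j)" by (simp add: lin_def fun_eq_iff mulu_def sc_def)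

lemma sop_apply: "sop m f F \<alpha> \<beta> = (\<Sum>j<m. f j F \<alpha> \<beta>)"
  by (simp add: sop_def)
lemma lin_sop_apply: "lin Op \<Longrightarrow> Op (sop m f F) \<alpha> \<beta> = (\<Sum>j<m. Op (f j F) \<alpha> \<beta>)"
  unfolding sop_def using lin_sum[of Op "{..<m}" "\<lambda>j. f j F"] by (simp add: fun_eq_iff)

lemma sop_comm:
  assumes "\<And>k. lin (Oa k)" "\<And>j. lin (Ob j)"
    "\<And>j k F. Oa k (Ob j F) = Ob j (Oa k F) + (if j = k then Oc j F else 0)"
  shows "sop m Oa (sop m Ob F) = sop m Ob (sop m Oa F) + sop m Oc F"
proof (rule ext, rule ext)
  fix \<alpha> \<beta>
  have e: "Oa k (Ob j F) \<alpha> \<beta> = Ob j (Oa k F) \<alpha> \<beta> + (if j = k then Oc j F \<alpha> \<beta> else 0)" for j k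
    by (subst assms(3)) (simp only: plus_fun_apply if_distrib[of "\<lambda>G. G \<alpha> \<beta>"] zero_fun_apply)
  have "sop m Oa (sop m Ob F) \<alpha> \<beta> = (\<Sum>k<m. \<Sum>j<m. Oa k (Ob j F) \<alpha> \<beta>)"
    by (simp only: sop_apply lin_sop_apply[OF assms(1)])
  also have "\<dots> = (\<Sum>k<m. \<Sum>j<m. Ob j (Oa k F) \<alpha> \<beta>) + (\<Sum>k<m. \<Sum>j<m. (if j = k then Oc j F \<alpha> \<beta> else 0))"
    by (simp only: e sum.distrib)
  also have "\<dots> = (\<Sum>j<m. \<Sum>k<m. Ob j (Oa k F) \<alpha> \<beta>) + (\<Sum>j<m. Oc j F \<alpha> \<beta>)"
  proof -
    have s1: "(\<Sum>k<m. \<Sum>j<m. Ob j (Oa k F) \<alpha> \<beta>) = (\<Sum>j<m. \<Sum>k<m. Ob j (Oa k F) \<alpha> \<beta>)"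
      by (rule sum.swap)
    have s2: "(\<Sum>k<m. \<Sum>j<m. (if j = k then Oc j F \<alpha> \<beta> else 0)) = (\<Sum>j<m. Oc j F \<alpha> \<beta>)"
      by (rule sum.cong) (auto simp: sum.delta)
    show ?thesis by (simp only: s1 s2)
  qed
  also have "\<dots> = (sop m Ob (sop m Oa F) + sop m Oc F) \<alpha> \<beta>"
    by (simp only: sop_apply lin_sop_apply[OF assms(2)] plus_fun_apply)
  finally show "sop m Oa (sop m Ob F) \<alpha> \<beta> = (sop m Ob (sop m Oa F) + sop m Oc F) \<alpha> \<beta>" .
qed


lemma ss2: "\<not> n \<le> Suc 0 \<Longrightarrow> Suc (Suc (n - Suc (Suc 0))) = n" by simp
lemma ss3: "\<not> n \<le> Suc 0 \<Longrightarrow> Suc (n - Suc (Suc 0)) = n - Suc 0" by simp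
lemma ss4: "0 < n \<Longrightarrow> (n \<le> Suc 0) = (n = Suc 0)" by auto
lemma sc_sc[simp]: "sc a (sc b F) = sc (a * b) F" by (simp add: sc_def fun_eq_iff)

lemma dx_add[simp]: "dx j (F + G) = dx j F + dx j G" using lin_dx lin_add by blast
lemma du_add[simp]: "du j (F + G) = du j F + du j G" using lin_du lin_add by blast
lemma mulx_add[simp]: "mulx j (F + G) = mulx j F + mulx j G" using lin_mulx lin_add by blast
lemma mulu_add[simp]: "mulu j (F + G) = mulu j F + mulu j G" using lin_mulu lin_add by blast
lemma dx_sc[simp]: "dx j (sc k F) = sc k (dx j F)" using lin_dx lin_sc by blast
lemma du_sc[simp]: "du j (sc k F) = sc k (du j F)" using lin_du lin_sc by blast
lemma mulx_sc[simp]: "mulx j (sc k F) = sc k (mulx j F)" using lin_mulx lin_sc by blast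
lemma mulu_sc[simp]: "mulu j (sc k F) = sc k (mulu j F)" using lin_mulu lin_sc by blast

definition "cc m = sop m (\<lambda>j F. mulu j (mulx j F))"
definition "aa m = sop m (\<lambda>j F. du j (dx j F))"
definition "sxo m = sop m (\<lambda>j F. mulx j (du j F))"
definition "suo m = sop m (\<lambda>j F. mulu j (dx j F))"
definition "exo m = sop m (\<lambda>j F. mulx j (dx j F))"
definition "euo m = sop m (\<lambda>j F. mulu j (du j F))"

lemma lx_sop: "lap_x m = sop m (\<lambda>j F. dx j (dx j F))" by (simp add: fun_eq_iff lap_x_def sop_def)
lemma lu_sop: "lap_u m = sop m (\<lambda>j F. du j (du j F))" by (simp add: fun_eq_iff lap_u_def sop_def)
lemma rr_sop: "norm2x m = sop m (\<lambda>j F. mulx j (mulx j F))" by (simp add: fun_eq_iff norm2x_def sop_def)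
lemma ss_sop: "norm2u m = sop m (\<lambda>j F. mulu j (mulu j F))" by (simp add: fun_eq_iff norm2u_def sop_def)

lemma sop_sc: "sop m (\<lambda>j F. sc c (f j F)) F = sc c (sop m f F)"
  by (simp add: sop_def sc_def fun_eq_iff sum_distrib_left)
lemma sop_plus: "sop m (\<lambda>j F. f j F + g j F) F = sop m f F + sop m g F"
  by (simp add: sop_def fun_eq_iff sum.distrib)
lemma sop_minus: "sop m (\<lambda>j F. f j F - g j F) F = sop m f F - sop m g F"
  by (simp add: sop_def fun_eq_iff sum_subtractf)
lemma sop_const: "sop m (\<lambda>j F. F) F = sc (of_nat m) F"
  by (simp add: sop_def fun_eq_iff sc_def)
lemma sop_zero: "sop m (\<lambda>j F. 0) F = 0"
  by (simp add: sop_def fun_eq_iff)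

lemma exo_eq: "exo m F = (\<lambda>\<alpha> \<beta>. of_nat (\<Sum>i<m. \<alpha> i) * F \<alpha> \<beta>)"
proof -
  have "mulx j (dx j F) \<alpha> \<beta> = of_nat (\<alpha> j) * F \<alpha> \<beta>" for j \<alpha> \<beta>
    by (auto simp: mulx_def dx_def)
  then show ?thesis unfolding exo_def euo_def sop_def by (simp add: fun_eq_iff sum_distrib_right)
qed
lemma euo_eq: "euo m F = (\<lambda>\<alpha> \<beta>. of_nat (\<Sum>i<m. \<beta> i) * F \<alpha> \<beta>)"
proof -
  have "mulu j (du j F) \<alpha> \<beta> = of_nat (\<beta> j) * F \<alpha> \<beta>" for j \<alpha> \<beta>
    by (auto simp: mulu_def du_def)
  then show ?thesis unfolding exo_def euo_def sop_def by (simp add: fun_eq_iff sum_distrib_right)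
qed

lemma C1: "lap_x m (aa m F) = aa m (lap_x m F)"
proof -
  have "sop m (\<lambda>k F. dx k (dx k F)) (sop m (\<lambda>j F. du j (dx j F)) F) =
    sop m (\<lambda>j F. du j (dx j F)) (sop m (\<lambda>k F. dx k (dx k F)) F) + sop m (\<lambda>j F. 0) F"
    by (rule sop_comm, simp add: lin_def, simp add: lin_def, rename_tac j k F, case_tac "j = k", auto simp: fun_eq_iff dx_def du_def mulx_def mulu_def sc_def fun_upd_twist algebra_simps ss2 ss3 ss4)
  then show ?thesis by (simp add: cc_def aa_def sxo_def suo_def exo_def euo_def lx_sop lu_sop rr_sop ss_sop sop_zero sop_sc sop_plus sop_minus sop_const)
qed

lemma C2: "lap_u m (aa m F) = aa m (lap_u m F)"
proof -
  have "sop m (\<lambda>k F. du k (du k F)) (sop m (\<lambda>j F. du j (dx j F)) F) =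
    sop m (\<lambda>j F. du j (dx j F)) (sop m (\<lambda>k F. du k (du k F)) F) + sop m (\<lambda>j F. 0) F"
    by (rule sop_comm, simp add: lin_def, simp add: lin_def, rename_tac j k F, case_tac "j = k", auto simp: fun_eq_iff dx_def du_def mulx_def mulu_def sc_def fun_upd_twist algebra_simps ss2 ss3 ss4)
  then show ?thesis by (simp add: cc_def aa_def sxo_def suo_def exo_def euo_def lx_sop lu_sop rr_sop ss_sop sop_zero sop_sc sop_plus sop_minus sop_const)
qed

lemma C3: "lap_x m (sxo m F) = sxo m (lap_x m F) + sc 2 (aa m F)"
proof -
  have "sop m (\<lambda>k F. dx k (dx k F)) (sop m (\<lambda>j F. mulx j (du j F)) F) =
    sop m (\<lambda>j F. mulx j (du j F)) (sop m (\<lambda>k F. dx k (dx k F)) F) + sop m (\<lambda>j F. sc 2 (du j (dx j F))) F"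
    by (rule sop_comm, simp add: lin_def, simp add: lin_def, rename_tac j k F, case_tac "j = k", auto simp: fun_eq_iff dx_def du_def mulx_def mulu_def sc_def fun_upd_twist algebra_simps ss2 ss3 ss4)
  then show ?thesis by (simp add: cc_def aa_def sxo_def suo_def exo_def euo_def lx_sop lu_sop rr_sop ss_sop sop_zero sop_sc sop_plus sop_minus sop_const)
qed

lemma C4: "lap_u m (sxo m F) = sxo m (lap_u m F)"
proof -
  have "sop m (\<lambda>k F. du k (du k F)) (sop m (\<lambda>j F. mulx j (du j F)) F) =
    sop m (\<lambda>j F. mulx j (du j F)) (sop m (\<lambda>k F. du k (du k F)) F) + sop m (\<lambda>j F. 0) F"
    by (rule sop_comm, simp add: lin_def, simp add: lin_def, rename_tac j k F, case_tac "j = k", auto simp: fun_eq_iff dx_def du_def mulx_def mulu_def sc_def fun_upd_twist algebra_simps ss2 ss3 ss4)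
  then show ?thesis by (simp add: cc_def aa_def sxo_def suo_def exo_def euo_def lx_sop lu_sop rr_sop ss_sop sop_zero sop_sc sop_plus sop_minus sop_const)
qed

lemma C5: "lap_x m (suo m F) = suo m (lap_x m F)"
proof -
  have "sop m (\<lambda>k F. dx k (dx k F)) (sop m (\<lambda>j F. mulu j (dx j F)) F) =
    sop m (\<lambda>j F. mulu j (dx j F)) (sop m (\<lambda>k F. dx k (dx k F)) F) + sop m (\<lambda>j F. 0) F"
    by (rule sop_comm, simp add: lin_def, simp add: lin_def, rename_tac j k F, case_tac "j = k", auto simp: fun_eq_iff dx_def du_def mulx_def mulu_def sc_def fun_upd_twist algebra_simps ss2 ss3 ss4)
  then show ?thesis by (simp add: cc_def aa_def sxo_def suo_def exo_def euo_def lx_sop lu_sop rr_sop ss_sop sop_zero sop_sc sop_plus sop_minus sop_const)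
qed

lemma C6: "lap_u m (suo m F) = suo m (lap_u m F) + sc 2 (aa m F)"
proof -
  have "sop m (\<lambda>k F. du k (du k F)) (sop m (\<lambda>j F. mulu j (dx j F)) F) =
    sop m (\<lambda>j F. mulu j (dx j F)) (sop m (\<lambda>k F. du k (du k F)) F) + sop m (\<lambda>j F. sc 2 (du j (dx j F))) F"
    by (rule sop_comm, simp add: lin_def, simp add: lin_def, rename_tac j k F, case_tac "j = k", auto simp: fun_eq_iff dx_def du_def mulx_def mulu_def sc_def fun_upd_twist algebra_simps ss2 ss3 ss4)
  then show ?thesis by (simp add: cc_def aa_def sxo_def suo_def exo_def euo_def lx_sop lu_sop rr_sop ss_sop sop_zero sop_sc sop_plus sop_minus sop_const)
qed

lemma C7: "lap_x m (cc m F) = cc m (lap_x m F) + sc 2 (suo m F)"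
proof -
  have "sop m (\<lambda>k F. dx k (dx k F)) (sop m (\<lambda>j F. mulu j (mulx j F)) F) =
    sop m (\<lambda>j F. mulu j (mulx j F)) (sop m (\<lambda>k F. dx k (dx k F)) F) + sop m (\<lambda>j F. sc 2 (mulu j (dx j F))) F"
    by (rule sop_comm, simp add: lin_def, simp add: lin_def, rename_tac j k F, case_tac "j = k", auto simp: fun_eq_iff dx_def du_def mulx_def mulu_def sc_def fun_upd_twist algebra_simps ss2 ss3 ss4)
  then show ?thesis by (simp add: cc_def aa_def sxo_def suo_def exo_def euo_def lx_sop lu_sop rr_sop ss_sop sop_zero sop_sc sop_plus sop_minus sop_const)
qed

lemma C8: "lap_u m (cc m F) = cc m (lap_u m F) + sc 2 (sxo m F)"
proof -
  have "sop m (\<lambda>k F. du k (du k F)) (sop m (\<lambda>j F. mulu j (mulx j F)) F) =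
    sop m (\<lambda>j F. mulu j (mulx j F)) (sop m (\<lambda>k F. du k (du k F)) F) + sop m (\<lambda>j F. sc 2 (mulx j (du j F))) F"
    by (rule sop_comm, simp add: lin_def, simp add: lin_def, rename_tac j k F, case_tac "j = k", auto simp: fun_eq_iff dx_def du_def mulx_def mulu_def sc_def fun_upd_twist algebra_simps ss2 ss3 ss4)
  then show ?thesis by (simp add: cc_def aa_def sxo_def suo_def exo_def euo_def lx_sop lu_sop rr_sop ss_sop sop_zero sop_sc sop_plus sop_minus sop_const)
qed

lemma C9: "lap_x m (norm2x m F) = norm2x m (lap_x m F) + sc 4 (exo m F) + sc (2 * of_nat m) F"
proof -
  have "sop m (\<lambda>k F. dx k (dx k F)) (sop m (\<lambda>j F. mulx j (mulx j F)) F) =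
    sop m (\<lambda>j F. mulx j (mulx j F)) (sop m (\<lambda>k F. dx k (dx k F)) F) + sop m (\<lambda>j F. sc 4 (mulx j (dx j F)) + sc 2 F) F"
    by (rule sop_comm, simp add: lin_def, simp add: lin_def, rename_tac j k F, case_tac "j = k", auto simp: fun_eq_iff dx_def du_def mulx_def mulu_def sc_def fun_upd_twist algebra_simps ss2 ss3 ss4)
  then show ?thesis by (simp add: cc_def aa_def sxo_def suo_def exo_def euo_def lx_sop lu_sop rr_sop ss_sop sop_zero sop_sc sop_plus sop_minus sop_const)
qed

lemma C10: "lap_u m (norm2x m F) = norm2x m (lap_u m F)"
proof -
  have "sop m (\<lambda>k F. du k (du k F)) (sop m (\<lambda>j F. mulx j (mulx j F)) F) =
    sop m (\<lambda>j F. mulx j (mulx j F)) (sop m (\<lambda>k F. du k (du k F)) F) + sop m (\<lambda>j F. 0) F"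
    by (rule sop_comm, simp add: lin_def, simp add: lin_def, rename_tac j k F, case_tac "j = k", auto simp: fun_eq_iff dx_def du_def mulx_def mulu_def sc_def fun_upd_twist algebra_simps ss2 ss3 ss4)
  then show ?thesis by (simp add: cc_def aa_def sxo_def suo_def exo_def euo_def lx_sop lu_sop rr_sop ss_sop sop_zero sop_sc sop_plus sop_minus sop_const)
qed

lemma C11: "lap_x m (norm2u m F) = norm2u m (lap_x m F)"
proof -
  have "sop m (\<lambda>k F. dx k (dx k F)) (sop m (\<lambda>j F. mulu j (mulu j F)) F) =
    sop m (\<lambda>j F. mulu j (mulu j F)) (sop m (\<lambda>k F. dx k (dx k F)) F) + sop m (\<lambda>j F. 0) F"
    by (rule sop_comm, simp add: lin_def, simp add: lin_def, rename_tac j k F, case_tac "j = k", auto simp: fun_eq_iff dx_def du_def mulx_def mulu_def sc_def fun_upd_twist algebra_simps ss2 ss3 ss4)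
  then show ?thesis by (simp add: cc_def aa_def sxo_def suo_def exo_def euo_def lx_sop lu_sop rr_sop ss_sop sop_zero sop_sc sop_plus sop_minus sop_const)
qed

lemma C12: "lap_u m (norm2u m F) = norm2u m (lap_u m F) + sc 4 (euo m F) + sc (2 * of_nat m) F"
proof -
  have "sop m (\<lambda>k F. du k (du k F)) (sop m (\<lambda>j F. mulu j (mulu j F)) F) =
    sop m (\<lambda>j F. mulu j (mulu j F)) (sop m (\<lambda>k F. du k (du k F)) F) + sop m (\<lambda>j F. sc 4 (mulu j (du j F)) + sc 2 F) F"
    by (rule sop_comm, simp add: lin_def, simp add: lin_def, rename_tac j k F, case_tac "j = k", auto simp: fun_eq_iff dx_def du_def mulx_def mulu_def sc_def fun_upd_twist algebra_simps ss2 ss3 ss4)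
  then show ?thesis by (simp add: cc_def aa_def sxo_def suo_def exo_def euo_def lx_sop lu_sop rr_sop ss_sop sop_zero sop_sc sop_plus sop_minus sop_const)
qed

lemma C13: "aa m (cc m F) = cc m (aa m F) + exo m F + euo m F + sc (of_nat m) F"
proof -
  have "sop m (\<lambda>k F. du k (dx k F)) (sop m (\<lambda>j F. mulu j (mulx j F)) F) =
    sop m (\<lambda>j F. mulu j (mulx j F)) (sop m (\<lambda>k F. du k (dx k F)) F) + sop m (\<lambda>j F. mulx j (dx j F) + mulu j (du j F) + F) F"
    by (rule sop_comm, simp add: lin_def, simp add: lin_def, rename_tac j k F, case_tac "j = k", auto simp: fun_eq_iff dx_def du_def mulx_def mulu_def sc_def fun_upd_twist algebra_simps ss2 ss3 ss4)
  then show ?thesis by (simp add: cc_def aa_def sxo_def suo_def exo_def euo_def lx_sop lu_sop rr_sop ss_sop sop_zero sop_sc sop_plus sop_minus sop_const)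
qed

lemma C14: "aa m (norm2x m F) = norm2x m (aa m F) + sc 2 (sxo m F)"
proof -
  have "sop m (\<lambda>k F. du k (dx k F)) (sop m (\<lambda>j F. mulx j (mulx j F)) F) =
    sop m (\<lambda>j F. mulx j (mulx j F)) (sop m (\<lambda>k F. du k (dx k F)) F) + sop m (\<lambda>j F. sc 2 (mulx j (du j F))) F"
    by (rule sop_comm, simp add: lin_def, simp add: lin_def, rename_tac j k F, case_tac "j = k", auto simp: fun_eq_iff dx_def du_def mulx_def mulu_def sc_def fun_upd_twist algebra_simps ss2 ss3 ss4)
  then show ?thesis by (simp add: cc_def aa_def sxo_def suo_def exo_def euo_def lx_sop lu_sop rr_sop ss_sop sop_zero sop_sc sop_plus sop_minus sop_const)
qed

lemma C15: "aa m (norm2u m F) = norm2u m (aa m F) + sc 2 (suo m F)"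
proof -
  have "sop m (\<lambda>k F. du k (dx k F)) (sop m (\<lambda>j F. mulu j (mulu j F)) F) =
    sop m (\<lambda>j F. mulu j (mulu j F)) (sop m (\<lambda>k F. du k (dx k F)) F) + sop m (\<lambda>j F. sc 2 (mulu j (dx j F))) F"
    by (rule sop_comm, simp add: lin_def, simp add: lin_def, rename_tac j k F, case_tac "j = k", auto simp: fun_eq_iff dx_def du_def mulx_def mulu_def sc_def fun_upd_twist algebra_simps ss2 ss3 ss4)
  then show ?thesis by (simp add: cc_def aa_def sxo_def suo_def exo_def euo_def lx_sop lu_sop rr_sop ss_sop sop_zero sop_sc sop_plus sop_minus sop_const)
qed

lemma C16: "aa m (suo m F) = suo m (aa m F) + lap_x m F"
proof -
  have "sop m (\<lambda>k F. du k (dx k F)) (sop m (\<lambda>j F. mulu j (dx j F)) F) =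
    sop m (\<lambda>j F. mulu j (dx j F)) (sop m (\<lambda>k F. du k (dx k F)) F) + sop m (\<lambda>j F. dx j (dx j F)) F"
    by (rule sop_comm, simp add: lin_def, simp add: lin_def, rename_tac j k F, case_tac "j = k", auto simp: fun_eq_iff dx_def du_def mulx_def mulu_def sc_def fun_upd_twist algebra_simps ss2 ss3 ss4)
  then show ?thesis by (simp add: cc_def aa_def sxo_def suo_def exo_def euo_def lx_sop lu_sop rr_sop ss_sop sop_zero sop_sc sop_plus sop_minus sop_const)
qed

lemma C17: "aa m (sxo m F) = sxo m (aa m F) + lap_u m F"
proof -
  have "sop m (\<lambda>k F. du k (dx k F)) (sop m (\<lambda>j F. mulx j (du j F)) F) =
    sop m (\<lambda>j F. mulx j (du j F)) (sop m (\<lambda>k F. du k (dx k F)) F) + sop m (\<lambda>j F. du j (du j F)) F"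
    by (rule sop_comm, simp add: lin_def, simp add: lin_def, rename_tac j k F, case_tac "j = k", auto simp: fun_eq_iff dx_def du_def mulx_def mulu_def sc_def fun_upd_twist algebra_simps ss2 ss3 ss4)
  then show ?thesis by (simp add: cc_def aa_def sxo_def suo_def exo_def euo_def lx_sop lu_sop rr_sop ss_sop sop_zero sop_sc sop_plus sop_minus sop_const)
qed

lemma C18: "sxo m (norm2u m F) = norm2u m (sxo m F) + sc 2 (cc m F)"
proof -
  have "sop m (\<lambda>k F. mulx k (du k F)) (sop m (\<lambda>j F. mulu j (mulu j F)) F) =
    sop m (\<lambda>j F. mulu j (mulu j F)) (sop m (\<lambda>k F. mulx k (du k F)) F) + sop m (\<lambda>j F. sc 2 (mulu j (mulx j F))) F"
    by (rule sop_comm, simp add: lin_def, simp add: lin_def, rename_tac j k F, case_tac "j = k", auto simp: fun_eq_iff dx_def du_def mulx_def mulu_def sc_def fun_upd_twist algebra_simps ss2 ss3 ss4)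
  then show ?thesis by (simp add: cc_def aa_def sxo_def suo_def exo_def euo_def lx_sop lu_sop rr_sop ss_sop sop_zero sop_sc sop_plus sop_minus sop_const)
qed

lemma C19: "suo m (norm2x m F) = norm2x m (suo m F) + sc 2 (cc m F)"
proof -
  have "sop m (\<lambda>k F. mulu k (dx k F)) (sop m (\<lambda>j F. mulx j (mulx j F)) F) =
    sop m (\<lambda>j F. mulx j (mulx j F)) (sop m (\<lambda>k F. mulu k (dx k F)) F) + sop m (\<lambda>j F. sc 2 (mulu j (mulx j F))) F"
    by (rule sop_comm, simp add: lin_def, simp add: lin_def, rename_tac j k F, case_tac "j = k", auto simp: fun_eq_iff dx_def du_def mulx_def mulu_def sc_def fun_upd_twist algebra_simps ss2 ss3 ss4)
  then show ?thesis by (simp add: cc_def aa_def sxo_def suo_def exo_def euo_def lx_sop lu_sop rr_sop ss_sop sop_zero sop_sc sop_plus sop_minus sop_const)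
qed

lemma C20: "sxo m (norm2x m F) = norm2x m (sxo m F)"
proof -
  have "sop m (\<lambda>k F. mulx k (du k F)) (sop m (\<lambda>j F. mulx j (mulx j F)) F) =
    sop m (\<lambda>j F. mulx j (mulx j F)) (sop m (\<lambda>k F. mulx k (du k F)) F) + sop m (\<lambda>j F. 0) F"
    by (rule sop_comm, simp add: lin_def, simp add: lin_def, rename_tac j k F, case_tac "j = k", auto simp: fun_eq_iff dx_def du_def mulx_def mulu_def sc_def fun_upd_twist algebra_simps ss2 ss3 ss4)
  then show ?thesis by (simp add: cc_def aa_def sxo_def suo_def exo_def euo_def lx_sop lu_sop rr_sop ss_sop sop_zero sop_sc sop_plus sop_minus sop_const)
qed

lemma C21: "suo m (norm2u m F) = norm2u m (suo m F)"
proof -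
  have "sop m (\<lambda>k F. mulu k (dx k F)) (sop m (\<lambda>j F. mulu j (mulu j F)) F) =
    sop m (\<lambda>j F. mulu j (mulu j F)) (sop m (\<lambda>k F. mulu k (dx k F)) F) + sop m (\<lambda>j F. 0) F"
    by (rule sop_comm, simp add: lin_def, simp add: lin_def, rename_tac j k F, case_tac "j = k", auto simp: fun_eq_iff dx_def du_def mulx_def mulu_def sc_def fun_upd_twist algebra_simps ss2 ss3 ss4)
  then show ?thesis by (simp add: cc_def aa_def sxo_def suo_def exo_def euo_def lx_sop lu_sop rr_sop ss_sop sop_zero sop_sc sop_plus sop_minus sop_const)
qed

lemma C22: "sxo m (suo m F) = suo m (sxo m F) + exo m F - euo m F"
proof -
  have "sop m (\<lambda>k F. mulx k (du k F)) (sop m (\<lambda>j F. mulu j (dx j F)) F) =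
    sop m (\<lambda>j F. mulu j (dx j F)) (sop m (\<lambda>k F. mulx k (du k F)) F) + sop m (\<lambda>j F. mulx j (dx j F) - mulu j (du j F)) F"
    by (rule sop_comm, simp add: lin_def, simp add: lin_def, rename_tac j k F, case_tac "j = k", auto simp: fun_eq_iff dx_def du_def mulx_def mulu_def sc_def fun_upd_twist algebra_simps ss2 ss3 ss4)
  then show ?thesis by (simp add: cc_def aa_def sxo_def suo_def exo_def euo_def lx_sop lu_sop rr_sop ss_sop sop_zero sop_sc sop_plus sop_minus sop_const)
qed

lemma C23: "lap_x m (lap_u m F) = lap_u m (lap_x m F)"
proof -
  have "sop m (\<lambda>k F. dx k (dx k F)) (sop m (\<lambda>j F. du j (du j F)) F) =
    sop m (\<lambda>j F. du j (du j F)) (sop m (\<lambda>k F. dx k (dx k F)) F) + sop m (\<lambda>j F. 0) F"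
    by (rule sop_comm, simp add: lin_def, simp add: lin_def, rename_tac j k F, case_tac "j = k", auto simp: fun_eq_iff dx_def du_def mulx_def mulu_def sc_def fun_upd_twist algebra_simps ss2 ss3 ss4)
  then show ?thesis by (simp add: cc_def aa_def sxo_def suo_def exo_def euo_def lx_sop lu_sop rr_sop ss_sop sop_zero sop_sc sop_plus sop_minus sop_const)
qed

lemma C24: "norm2x m (norm2u m F) = norm2u m (norm2x m F)"
proof -
  have "sop m (\<lambda>k F. mulx k (mulx k F)) (sop m (\<lambda>j F. mulu j (mulu j F)) F) =
    sop m (\<lambda>j F. mulu j (mulu j F)) (sop m (\<lambda>k F. mulx k (mulx k F)) F) + sop m (\<lambda>j F. 0) F"
    by (rule sop_comm, simp add: lin_def, simp add: lin_def, rename_tac j k F, case_tac "j = k", auto simp: fun_eq_iff dx_def du_def mulx_def mulu_def sc_def fun_upd_twist algebra_simps ss2 ss3 ss4)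
  then show ?thesis by (simp add: cc_def aa_def sxo_def suo_def exo_def euo_def lx_sop lu_sop rr_sop ss_sop sop_zero sop_sc sop_plus sop_minus sop_const)
qed

lemma C25: "aa m (lap_x m F) = lap_x m (aa m F)"
proof -
  have "sop m (\<lambda>k F. du k (dx k F)) (sop m (\<lambda>j F. dx j (dx j F)) F) =
    sop m (\<lambda>j F. dx j (dx j F)) (sop m (\<lambda>k F. du k (dx k F)) F) + sop m (\<lambda>j F. 0) F"
    by (rule sop_comm, simp add: lin_def, simp add: lin_def, rename_tac j k F, case_tac "j = k", auto simp: fun_eq_iff dx_def du_def mulx_def mulu_def sc_def fun_upd_twist algebra_simps ss2 ss3 ss4)
  then show ?thesis by (simp add: cc_def aa_def sxo_def suo_def exo_def euo_def lx_sop lu_sop rr_sop ss_sop sop_zero sop_sc sop_plus sop_minus sop_const)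
qed

lemma C26: "aa m (lap_u m F) = lap_u m (aa m F)"
proof -
  have "sop m (\<lambda>k F. du k (dx k F)) (sop m (\<lambda>j F. du j (du j F)) F) =
    sop m (\<lambda>j F. du j (du j F)) (sop m (\<lambda>k F. du k (dx k F)) F) + sop m (\<lambda>j F. 0) F"
    by (rule sop_comm, simp add: lin_def, simp add: lin_def, rename_tac j k F, case_tac "j = k", auto simp: fun_eq_iff dx_def du_def mulx_def mulu_def sc_def fun_upd_twist algebra_simps ss2 ss3 ss4)
  then show ?thesis by (simp add: cc_def aa_def sxo_def suo_def exo_def euo_def lx_sop lu_sop rr_sop ss_sop sop_zero sop_sc sop_plus sop_minus sop_const)
qed


lemma sum_upd: "(j::nat) < m \<Longrightarrow> (\<Sum>i<m. (\<alpha>(j:=v)) i) + \<alpha> j = (\<Sum>i<m. \<alpha> i) + (v::nat)"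
proof -
  assume j: "j < m"
  have a: "(\<Sum>i<m. (\<alpha>(j:=v)) i) = (\<alpha>(j:=v)) j + (\<Sum>i\<in>{..<m}-{j}. (\<alpha>(j:=v)) i)"
    using j by (intro sum.remove) auto
  have b: "(\<Sum>i<m. \<alpha> i) = \<alpha> j + (\<Sum>i\<in>{..<m}-{j}. \<alpha> i)"
    using j by (intro sum.remove) auto
  have c: "(\<Sum>i\<in>{..<m}-{j}. (\<alpha>(j:=v)) i) = (\<Sum>i\<in>{..<m}-{j}. \<alpha> i)"
    by (rule sum.cong) auto
  show ?thesis using a b c by simp
qed

lemma prod_upd: "(j::nat) < m \<Longrightarrow> (\<Prod>i<m. fact ((\<alpha>(j:=v)) i)) * fact (\<alpha> j) = (\<Prod>i<m. fact (\<alpha> i)) * (fact v :: nat)"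
proof -
  assume j: "j < m"
  have a: "(\<Prod>i<m. fact ((\<alpha>(j:=v)) i)) = fact ((\<alpha>(j:=v)) j) * (\<Prod>i\<in>{..<m}-{j}. fact ((\<alpha>(j:=v)) i) :: nat)"
    using j by (intro prod.remove) auto
  have b: "(\<Prod>i<m. fact (\<alpha> i)) = fact (\<alpha> j) * (\<Prod>i\<in>{..<m}-{j}. fact (\<alpha> i) :: nat)"
    using j by (intro prod.remove) auto
  have c: "(\<Prod>i\<in>{..<m}-{j}. fact ((\<alpha>(j:=v)) i) :: nat) = (\<Prod>i\<in>{..<m}-{j}. fact (\<alpha> i))"
    by (rule prod.cong) auto
  show ?thesis using a b c by simp
qed

definition degx :: "nat \<Rightarrow> cpoly \<Rightarrow> int \<Rightarrow> bool" where
  "degx m F p \<longleftrightarrow> (\<forall>\<alpha> \<beta>. F \<alpha> \<beta> \<noteq> 0 \<longrightarrow> int (\<Sum>i<m. \<alpha> i) = p)"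
definition degu :: "nat \<Rightarrow> cpoly \<Rightarrow> int \<Rightarrow> bool" where
  "degu m F p \<longleftrightarrow> (\<forall>\<alpha> \<beta>. F \<alpha> \<beta> \<noteq> 0 \<longrightarrow> int (\<Sum>i<m. \<beta> i) = p)"

lemma degx_dx: "j < m \<Longrightarrow> degx m F p \<Longrightarrow> degx m (dx j F) (p - 1)"
  unfolding degx_def dx_def
proof (intro allI impI)
  fix \<alpha> \<beta> assume j: "j < m" and d: "\<forall>\<alpha> \<beta>. F \<alpha> \<beta> \<noteq> 0 \<longrightarrow> int (\<Sum>i<m. \<alpha> i) = p"
    and ne: "of_nat (\<alpha> j + 1) * F (\<alpha>(j := \<alpha> j + 1)) \<beta> \<noteq> 0"
  then have "int (\<Sum>i<m. (\<alpha>(j := \<alpha> j + 1)) i) = p" by auto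
  moreover have "(\<Sum>i<m. (\<alpha>(j := \<alpha> j + 1)) i) + \<alpha> j = (\<Sum>i<m. \<alpha> i) + (\<alpha> j + 1)"
    by (rule sum_upd[OF j])
  ultimately show "int (\<Sum>i<m. \<alpha> i) = p - 1" by linarith
qed
lemma degu_du: "j < m \<Longrightarrow> degu m F p \<Longrightarrow> degu m (du j F) (p - 1)"
  unfolding degu_def du_def
proof (intro allI impI)
  fix \<alpha> \<beta> assume j: "j < m" and d: "\<forall>\<alpha> \<beta>. F \<alpha> \<beta> \<noteq> 0 \<longrightarrow> int (\<Sum>i<m. \<beta> i) = p"
    and ne: "of_nat (\<beta> j + 1) * F \<alpha> (\<beta>(j := \<beta> j + 1)) \<noteq> 0"
  then have "int (\<Sum>i<m. (\<beta>(j := \<beta> j + 1)) i) = p" by (metis mult_zero_right)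
  moreover have "(\<Sum>i<m. (\<beta>(j := \<beta> j + 1)) i) + \<beta> j = (\<Sum>i<m. \<beta> i) + (\<beta> j + 1)"
    by (rule sum_upd[OF j])
  ultimately show "int (\<Sum>i<m. \<beta> i) = p - 1" by linarith
qed
lemma degx_mulx: "j < m \<Longrightarrow> degx m F p \<Longrightarrow> degx m (mulx j F) (p + 1)"
  unfolding degx_def mulx_def
proof (intro allI impI)
  fix \<alpha> \<beta> assume j: "j < m" and d: "\<forall>\<alpha> \<beta>. F \<alpha> \<beta> \<noteq> 0 \<longrightarrow> int (\<Sum>i<m. \<alpha> i) = p"
    and ne: "(if \<alpha> j = 0 then 0 else F (\<alpha>(j := \<alpha> j - 1)) \<beta>) \<noteq> 0"
  then have "int (\<Sum>i<m. (\<alpha>(j := \<alpha> j - 1)) i) = p" and "\<alpha> j \<noteq> 0" by (auto split: if_splits)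
  moreover have "(\<Sum>i<m. (\<alpha>(j := \<alpha> j - 1)) i) + \<alpha> j = (\<Sum>i<m. \<alpha> i) + (\<alpha> j - 1)"
    by (rule sum_upd[OF j])
  ultimately show "int (\<Sum>i<m. \<alpha> i) = p + 1" by linarith
qed
lemma degu_mulu: "j < m \<Longrightarrow> degu m F p \<Longrightarrow> degu m (mulu j F) (p + 1)"
  unfolding degu_def mulu_def
proof (intro allI impI)
  fix \<alpha> \<beta> assume j: "j < m" and d: "\<forall>\<alpha> \<beta>. F \<alpha> \<beta> \<noteq> 0 \<longrightarrow> int (\<Sum>i<m. \<beta> i) = p"
    and ne: "(if \<beta> j = 0 then 0 else F \<alpha> (\<beta>(j := \<beta> j - 1))) \<noteq> 0"
  then have "int (\<Sum>i<m. (\<beta>(j := \<beta> j - 1)) i) = p" and "\<beta> j \<noteq> 0" by (metis, metis)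
  moreover have "(\<Sum>i<m. (\<beta>(j := \<beta> j - 1)) i) + \<beta> j = (\<Sum>i<m. \<beta> i) + (\<beta> j - 1)"
    by (rule sum_upd[OF j])
  ultimately show "int (\<Sum>i<m. \<beta> i) = p + 1" by linarith
qed
lemma degx_du: "degx m F p \<Longrightarrow> degx m (du j F) p"
  by (auto simp: degx_def du_def)
lemma degx_mulu: "degx m F p \<Longrightarrow> degx m (mulu j F) p"
  by (auto simp: degx_def mulu_def split: if_splits)
lemma degu_dx: "degu m F p \<Longrightarrow> degu m (dx j F) p"
  by (auto simp: degu_def dx_def)
lemma degu_mulx: "degu m F p \<Longrightarrow> degu m (mulx j F) p"
  by (auto simp: degu_def mulx_def split: if_splits)

lemma degx_add: "degx m F p \<Longrightarrow> degx m G p \<Longrightarrow> degx m (F + G) p"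
proof (unfold degx_def, intro allI impI)
  fix \<alpha> \<beta> assume A: "\<forall>\<alpha> \<beta>. F \<alpha> \<beta> \<noteq> 0 \<longrightarrow> int (\<Sum>i<m. \<alpha> i) = p"
    and B: "\<forall>\<alpha> \<beta>. G \<alpha> \<beta> \<noteq> 0 \<longrightarrow> int (\<Sum>i<m. \<alpha> i) = p" and ne: "(F + G) \<alpha> \<beta> \<noteq> 0"
  then have "F \<alpha> \<beta> \<noteq> 0 \<or> G \<alpha> \<beta> \<noteq> 0" by auto
  then show "int (\<Sum>i<m. \<alpha> i) = p" using A B by blast
qed
lemma degu_add: "degu m F p \<Longrightarrow> degu m G p \<Longrightarrow> degu m (F + G) p"
proof (unfold degu_def, intro allI impI)
  fix \<alpha> \<beta> assume A: "\<forall>\<alpha> \<beta>. F \<alpha> \<beta> \<noteq> 0 \<longrightarrow> int (\<Sum>i<m. \<beta> i) = p"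
    and B: "\<forall>\<alpha> \<beta>. G \<alpha> \<beta> \<noteq> 0 \<longrightarrow> int (\<Sum>i<m. \<beta> i) = p" and ne: "(F + G) \<alpha> \<beta> \<noteq> 0"
  then have "F \<alpha> \<beta> \<noteq> 0 \<or> G \<alpha> \<beta> \<noteq> 0" by auto
  then show "int (\<Sum>i<m. \<beta> i) = p" using A B by blast
qed
lemma degx_diff: "degx m F p \<Longrightarrow> degx m G p \<Longrightarrow> degx m (F - G) p"
proof (unfold degx_def, intro allI impI)
  fix \<alpha> \<beta> assume A: "\<forall>\<alpha> \<beta>. F \<alpha> \<beta> \<noteq> 0 \<longrightarrow> int (\<Sum>i<m. \<alpha> i) = p"
    and B: "\<forall>\<alpha> \<beta>. G \<alpha> \<beta> \<noteq> 0 \<longrightarrow> int (\<Sum>i<m. \<alpha> i) = p" and ne: "(F - G) \<alpha> \<beta> \<noteq> 0"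
  then have "F \<alpha> \<beta> \<noteq> 0 \<or> G \<alpha> \<beta> \<noteq> 0" by auto
  then show "int (\<Sum>i<m. \<alpha> i) = p" using A B by blast
qed
lemma degu_diff: "degu m F p \<Longrightarrow> degu m G p \<Longrightarrow> degu m (F - G) p"
proof (unfold degu_def, intro allI impI)
  fix \<alpha> \<beta> assume A: "\<forall>\<alpha> \<beta>. F \<alpha> \<beta> \<noteq> 0 \<longrightarrow> int (\<Sum>i<m. \<beta> i) = p"
    and B: "\<forall>\<alpha> \<beta>. G \<alpha> \<beta> \<noteq> 0 \<longrightarrow> int (\<Sum>i<m. \<beta> i) = p" and ne: "(F - G) \<alpha> \<beta> \<noteq> 0"
  then have "F \<alpha> \<beta> \<noteq> 0 \<or> G \<alpha> \<beta> \<noteq> 0" by auto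
  then show "int (\<Sum>i<m. \<beta> i) = p" using A B by blast
qed
lemma degx_sc: "degx m F p \<Longrightarrow> degx m (sc k F) p"
  by (auto simp: degx_def sc_def)
lemma degu_sc: "degu m F p \<Longrightarrow> degu m (sc k F) p"
  by (auto simp: degu_def sc_def)
lemma degx_sop: "(\<And>j. j < m \<Longrightarrow> degx m (f j F) p) \<Longrightarrow> degx m (sop m f F) p"
proof (unfold degx_def, intro allI impI)
  fix \<alpha> \<beta> assume h: "\<And>j. j < m \<Longrightarrow> \<forall>\<alpha> \<beta>. f j F \<alpha> \<beta> \<noteq> 0 \<longrightarrow> int (\<Sum>i<m. \<alpha> i) = p"
    and ne: "sop m f F \<alpha> \<beta> \<noteq> 0"
  then obtain j where "j < m" "f j F \<alpha> \<beta> \<noteq> 0" unfolding sop_def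
    by (metis (mono_tags, lifting) lessThan_iff sum.neutral)
  then show "int (\<Sum>i<m. \<alpha> i) = p" using h by blast
qed
lemma degu_sop: "(\<And>j. j < m \<Longrightarrow> degu m (f j F) p) \<Longrightarrow> degu m (sop m f F) p"
proof (unfold degu_def, intro allI impI)
  fix \<alpha> \<beta> assume h: "\<And>j. j < m \<Longrightarrow> \<forall>\<alpha> \<beta>. f j F \<alpha> \<beta> \<noteq> 0 \<longrightarrow> int (\<Sum>i<m. \<beta> i) = p"
    and ne: "sop m f F \<alpha> \<beta> \<noteq> 0"
  then obtain j where "j < m" "f j F \<alpha> \<beta> \<noteq> 0" unfolding sop_def
    by (metis (mono_tags, lifting) lessThan_iff sum.neutral)
  then show "int (\<Sum>i<m. \<beta> i) = p" using h by blast
qed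

lemma exo_deg: "degx m F p \<Longrightarrow> exo m F = sc (of_int p) F"
  unfolding exo_eq sc_def degx_def fun_eq_iff
  by (metis mult_zero_right of_int_of_nat_eq)
lemma euo_deg: "degu m F p \<Longrightarrow> euo m F = sc (of_int p) F"
  unfolding euo_eq sc_def degu_def fun_eq_iff
  by (metis mult_zero_right of_int_of_nat_eq)
lemma diagop_deg: "degx m F p \<Longrightarrow> degu m F q \<Longrightarrow>
   diagop m f F = sc (f (- (of_int p + of_nat m / 2)) (- (of_int q + of_nat m / 2))) F"
  unfolding diagop_def sc_def degx_def degu_def fun_eq_iff
  by (metis mult_zero_right of_int_of_nat_eq)

lemma degx_aa: "degx m F p \<Longrightarrow> degx m (aa m F) (p - 1)"
  unfolding aa_def by (intro degx_sop degx_du degx_dx)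
lemma degu_aa: "degu m F p \<Longrightarrow> degu m (aa m F) (p - 1)"
  unfolding aa_def by (intro degu_sop degu_du degu_dx)
lemma degx_cc: "degx m F p \<Longrightarrow> degx m (cc m F) (p + 1)"
  unfolding cc_def by (intro degx_sop degx_mulu degx_mulx)
lemma degu_cc: "degu m F p \<Longrightarrow> degu m (cc m F) (p + 1)"
  unfolding cc_def by (intro degu_sop degu_mulu degu_mulx)
lemma degx_sxo: "degx m F p \<Longrightarrow> degx m (sxo m F) (p + 1)"
  unfolding sxo_def by (intro degx_sop degx_mulx degx_du)
lemma degu_sxo: "degu m F p \<Longrightarrow> degu m (sxo m F) (p - 1)"
  unfolding sxo_def by (intro degu_sop degu_mulx degu_du)
lemma degx_suo: "degx m F p \<Longrightarrow> degx m (suo m F) (p - 1)"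
  unfolding suo_def by (intro degx_sop degx_mulu degx_dx)
lemma degu_suo: "degu m F p \<Longrightarrow> degu m (suo m F) (p + 1)"
  unfolding suo_def by (intro degu_sop degu_mulu degu_dx)
lemma degx_rr: "degx m F p \<Longrightarrow> degx m (norm2x m F) (p + 2)"
proof -
  assume "degx m F p"
  then have "degx m (norm2x m F) (p + 1 + 1)"
    unfolding rr_sop by (intro degx_sop degx_mulx)
  then show ?thesis by (simp add: add.assoc)
qed
lemma degu_rr: "degu m F p \<Longrightarrow> degu m (norm2x m F) p"
  unfolding rr_sop by (intro degu_sop degu_mulx)
lemma degx_ss: "degx m F p \<Longrightarrow> degx m (norm2u m F) p"
  unfolding ss_sop by (intro degx_sop degx_mulu)
lemma degu_ss: "degu m F p \<Longrightarrow> degu m (norm2u m F) (p + 2)"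
proof -
  assume "degu m F p"
  then have "degu m (norm2u m F) (p + 1 + 1)"
    unfolding ss_sop by (intro degu_sop degu_mulu)
  then show ?thesis by (simp add: add.assoc)
qed


definition supp :: "cpoly \<Rightarrow> ((nat \<Rightarrow> nat) \<times> (nat \<Rightarrow> nat)) set" where
  "supp F = {x. F (fst x) (snd x) \<noteq> 0}"

lemma is_poly_iff: "is_poly m F \<longleftrightarrow> finite (supp F) \<and> (\<forall>\<alpha> \<beta>. F \<alpha> \<beta> \<noteq> 0 \<longrightarrow> (\<forall>i\<ge>m. \<alpha> i = 0 \<and> \<beta> i = 0))"
proof -
  have "{(\<alpha>, \<beta>). F \<alpha> \<beta> \<noteq> 0} = supp F" by (auto simp: supp_def)
  then show ?thesis by (simp add: is_poly_def)
qed

lemma is_poly_zero: "is_poly m 0" by (simp add: is_poly_iff supp_def)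
lemma zero_poly_0: "zero_poly = 0" by (simp add: zero_poly_def zero_fun_def)

lemma is_poly_add: "is_poly m F \<Longrightarrow> is_poly m G \<Longrightarrow> is_poly m (F + G)"
proof -
  assume a: "is_poly m F" "is_poly m G"
  have "supp (F + G) \<subseteq> supp F \<union> supp G" by (auto simp: supp_def)
  moreover have "finite (supp F \<union> supp G)" using a by (simp add: is_poly_iff)
  ultimately have "finite (supp (F + G))" by (rule finite_subset)
  moreover have "\<forall>\<alpha> \<beta>. (F + G) \<alpha> \<beta> \<noteq> 0 \<longrightarrow> (\<forall>i\<ge>m. \<alpha> i = 0 \<and> \<beta> i = 0)"
  proof (intro allI impI)
    fix \<alpha> \<beta> i assume ne: "(F + G) \<alpha> \<beta> \<noteq> 0" and i: "m \<le> i"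
    then have "F \<alpha> \<beta> \<noteq> 0 \<or> G \<alpha> \<beta> \<noteq> 0" by auto
    then show "\<alpha> i = 0 \<and> \<beta> i = 0" using a i unfolding is_poly_iff by blast
  qed
  ultimately show ?thesis by (simp add: is_poly_iff)
qed
lemma is_poly_sc: "is_poly m F \<Longrightarrow> is_poly m (sc k F)"
proof -
  assume a: "is_poly m F"
  have "supp (sc k F) \<subseteq> supp F" by (auto simp: supp_def sc_def)
  then show ?thesis using a unfolding is_poly_iff by (auto simp: sc_def intro: finite_subset)
qed
lemma is_poly_diff: "is_poly m F \<Longrightarrow> is_poly m G \<Longrightarrow> is_poly m (F - G)"
  by (simp add: minus_sc is_poly_add is_poly_sc)
lemma is_poly_sum: "finite J \<Longrightarrow> (\<And>j. j \<in> J \<Longrightarrow> is_poly m (G j)) \<Longrightarrow> is_poly m (\<lambda>\<alpha> \<beta>. \<Sum>j\<in>J. G j \<alpha> \<beta>)"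
proof (induction J rule: finite_induct)
  case empty
  then show ?case using is_poly_zero by (simp add: zero_fun_def)
next
  case (insert x J)
  have "(\<lambda>\<alpha> \<beta>. \<Sum>j\<in>insert x J. G j \<alpha> \<beta>) = G x + (\<lambda>\<alpha> \<beta>. \<Sum>j\<in>J. G j \<alpha> \<beta>)"
    using insert by (simp add: fun_eq_iff)
  then show ?case using insert is_poly_add by simp
qed
lemma is_poly_sop: "(\<And>j. j < m \<Longrightarrow> is_poly n (f j F)) \<Longrightarrow> is_poly n (sop m f F)"
  unfolding sop_def by (rule is_poly_sum) auto

lemma is_poly_mulx: "j < m \<Longrightarrow> is_poly m F \<Longrightarrow> is_poly m (mulx j F)"
proof -
  assume j: "j < m" and a: "is_poly m F"
  have "supp (mulx j F) \<subseteq> (\<lambda>x. ((fst x)(j := Suc (fst x j)), snd x)) ` supp F"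
  proof
    fix x assume "x \<in> supp (mulx j F)"
    then have "fst x j \<noteq> 0" "F ((fst x)(j := fst x j - 1)) (snd x) \<noteq> 0"
      by (auto simp: supp_def mulx_def split: if_splits)
    then show "x \<in> (\<lambda>x. ((fst x)(j := Suc (fst x j)), snd x)) ` supp F"
      by (intro image_eqI[of _ _ "((fst x)(j := fst x j - 1), snd x)"]) (auto simp: supp_def)
  qed
  moreover have "finite (supp F)" using a by (simp add: is_poly_iff)
  ultimately have "finite (supp (mulx j F))" by (meson finite_imageI finite_subset)
  moreover have "\<forall>\<alpha> \<beta>. mulx j F \<alpha> \<beta> \<noteq> 0 \<longrightarrow> (\<forall>i\<ge>m. \<alpha> i = 0 \<and> \<beta> i = 0)"
  proof (intro allI impI)
    fix \<alpha> \<beta> i assume ne: "mulx j F \<alpha> \<beta> \<noteq> 0" and i: "m \<le> i"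
    then have "F (\<alpha>(j := \<alpha> j - 1)) \<beta> \<noteq> 0" by (auto simp: mulx_def split: if_splits)
    then have "(\<alpha>(j := \<alpha> j - 1)) i = 0 \<and> \<beta> i = 0" using a i unfolding is_poly_iff by blast
    then show "\<alpha> i = 0 \<and> \<beta> i = 0" using i j by auto
  qed
  ultimately show ?thesis by (simp add: is_poly_iff)
qed
lemma is_poly_mulu: "j < m \<Longrightarrow> is_poly m F \<Longrightarrow> is_poly m (mulu j F)"
proof -
  assume j: "j < m" and a: "is_poly m F"
  have "supp (mulu j F) \<subseteq> (\<lambda>x. (fst x, (snd x)(j := Suc (snd x j)))) ` supp F"
  proof
    fix x assume "x \<in> supp (mulu j F)"
    then have "snd x j \<noteq> 0" "F (fst x) ((snd x)(j := snd x j - 1)) \<noteq> 0"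
      by (auto simp: supp_def mulu_def split: if_splits)
    then show "x \<in> (\<lambda>x. (fst x, (snd x)(j := Suc (snd x j)))) ` supp F"
      by (intro image_eqI[of _ _ "(fst x, (snd x)(j := snd x j - 1))"]) (auto simp: supp_def)
  qed
  moreover have "finite (supp F)" using a by (simp add: is_poly_iff)
  ultimately have "finite (supp (mulu j F))" by (meson finite_imageI finite_subset)
  moreover have "\<forall>\<alpha> \<beta>. mulu j F \<alpha> \<beta> \<noteq> 0 \<longrightarrow> (\<forall>i\<ge>m. \<alpha> i = 0 \<and> \<beta> i = 0)"
  proof (intro allI impI)
    fix \<alpha> \<beta> i assume ne: "mulu j F \<alpha> \<beta> \<noteq> 0" and i: "m \<le> i"
    then have "F \<alpha> (\<beta>(j := \<beta> j - 1)) \<noteq> 0" by (auto simp: mulu_def split: if_splits)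
    then have "\<alpha> i = 0 \<and> (\<beta>(j := \<beta> j - 1)) i = 0" using a i unfolding is_poly_iff by blast
    then show "\<alpha> i = 0 \<and> \<beta> i = 0" using i j by auto
  qed
  ultimately show ?thesis by (simp add: is_poly_iff)
qed
lemma is_poly_dx: "j < m \<Longrightarrow> is_poly m F \<Longrightarrow> is_poly m (dx j F)"
proof -
  assume j: "j < m" and a: "is_poly m F"
  have "supp (dx j F) \<subseteq> (\<lambda>x. ((fst x)(j := fst x j - 1), snd x)) ` supp F"
  proof
    fix x assume "x \<in> supp (dx j F)"
    then have "F ((fst x)(j := fst x j + 1)) (snd x) \<noteq> 0"
      by (auto simp: supp_def dx_def)
    then show "x \<in> (\<lambda>x. ((fst x)(j := fst x j - 1), snd x)) ` supp F"
      by (intro image_eqI[of _ _ "((fst x)(j := fst x j + 1), snd x)"]) (auto simp: supp_def)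
  qed
  moreover have "finite (supp F)" using a by (simp add: is_poly_iff)
  ultimately have "finite (supp (dx j F))" by (meson finite_imageI finite_subset)
  moreover have "\<forall>\<alpha> \<beta>. dx j F \<alpha> \<beta> \<noteq> 0 \<longrightarrow> (\<forall>i\<ge>m. \<alpha> i = 0 \<and> \<beta> i = 0)"
  proof (intro allI impI)
    fix \<alpha> \<beta> i assume ne: "dx j F \<alpha> \<beta> \<noteq> 0" and i: "m \<le> i"
    then have "F (\<alpha>(j := \<alpha> j + 1)) \<beta> \<noteq> 0" by (auto simp: dx_def)
    then have "(\<alpha>(j := \<alpha> j + 1)) i = 0 \<and> \<beta> i = 0" using a i unfolding is_poly_iff by blast
    then show "\<alpha> i = 0 \<and> \<beta> i = 0" using i j by auto
  qed
  ultimately show ?thesis by (simp add: is_poly_iff)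
qed
lemma is_poly_du: "j < m \<Longrightarrow> is_poly m F \<Longrightarrow> is_poly m (du j F)"
proof -
  assume j: "j < m" and a: "is_poly m F"
  have "supp (du j F) \<subseteq> (\<lambda>x. (fst x, (snd x)(j := snd x j - 1))) ` supp F"
  proof
    fix x assume "x \<in> supp (du j F)"
    then have "F (fst x) ((snd x)(j := snd x j + 1)) \<noteq> 0"
      by (auto simp: supp_def du_def)
    then show "x \<in> (\<lambda>x. (fst x, (snd x)(j := snd x j - 1))) ` supp F"
      by (intro image_eqI[of _ _ "(fst x, (snd x)(j := snd x j + 1))"]) (auto simp: supp_def)
  qed
  moreover have "finite (supp F)" using a by (simp add: is_poly_iff)
  ultimately have "finite (supp (du j F))" by (meson finite_imageI finite_subset)
  moreover have "\<forall>\<alpha> \<beta>. du j F \<alpha> \<beta> \<noteq> 0 \<longrightarrow> (\<forall>i\<ge>m. \<alpha> i = 0 \<and> \<beta> i = 0)"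
  proof (intro allI impI)
    fix \<alpha> \<beta> i assume ne: "du j F \<alpha> \<beta> \<noteq> 0" and i: "m \<le> i"
    then have "F \<alpha> (\<beta>(j := \<beta> j + 1)) \<noteq> 0" by (auto simp: du_def)
    then have "\<alpha> i = 0 \<and> (\<beta>(j := \<beta> j + 1)) i = 0" using a i unfolding is_poly_iff by blast
    then show "\<alpha> i = 0 \<and> \<beta> i = 0" using i j by auto
  qed
  ultimately show ?thesis by (simp add: is_poly_iff)
qed

lemma is_poly_aa: "is_poly m F \<Longrightarrow> is_poly m (aa m F)"
  unfolding aa_def by (intro is_poly_sop is_poly_du is_poly_dx)
lemma is_poly_cc: "is_poly m F \<Longrightarrow> is_poly m (cc m F)"
  unfolding cc_def by (intro is_poly_sop is_poly_mulu is_poly_mulx)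
lemma is_poly_sxo: "is_poly m F \<Longrightarrow> is_poly m (sxo m F)"
  unfolding sxo_def by (intro is_poly_sop is_poly_mulx is_poly_du)
lemma is_poly_suo: "is_poly m F \<Longrightarrow> is_poly m (suo m F)"
  unfolding suo_def by (intro is_poly_sop is_poly_mulu is_poly_dx)
lemma is_poly_rr: "is_poly m F \<Longrightarrow> is_poly m (norm2x m F)"
  unfolding rr_sop by (intro is_poly_sop is_poly_mulx)
lemma is_poly_ss: "is_poly m F \<Longrightarrow> is_poly m (norm2u m F)"
  unfolding ss_sop by (intro is_poly_sop is_poly_mulu)
lemma is_poly_lx: "is_poly m F \<Longrightarrow> is_poly m (lap_x m F)"
  unfolding lx_sop by (intro is_poly_sop is_poly_dx)
lemma is_poly_lu: "is_poly m F \<Longrightarrow> is_poly m (lap_u m F)"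
  unfolding lu_sop by (intro is_poly_sop is_poly_du)


definition wt :: "nat \<Rightarrow> (nat \<Rightarrow> nat) \<Rightarrow> (nat \<Rightarrow> nat) \<Rightarrow> nat" where
  "wt m \<alpha> \<beta> = (\<Prod>i<m. fact (\<alpha> i)) * (\<Prod>i<m. fact (\<beta> i))"

definition ip :: "nat \<Rightarrow> cpoly \<Rightarrow> cpoly \<Rightarrow> complex" where
  "ip m F G = (\<Sum>x\<in>supp G. of_nat (wt m (fst x) (snd x)) * F (fst x) (snd x) * cnj (G (fst x) (snd x)))"

lemma ip_on: assumes "finite S" "supp G \<subseteq> S"
  shows "ip m F G = (\<Sum>x\<in>S. of_nat (wt m (fst x) (snd x)) * F (fst x) (snd x) * cnj (G (fst x) (snd x)))"
  unfolding ip_def using assms by (intro sum.mono_neutral_left) (simp_all add: supp_def)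

lemma ip_add1: "ip m (F + G) H = ip m F H + ip m G H"
  unfolding ip_def sum.distrib[symmetric] by (rule sum.cong) (simp_all add: distrib_left distrib_right)
lemma ip_sc1: "ip m (sc k F) H = k * ip m F H"
  unfolding ip_def sc_def sum_distrib_left by (rule sum.cong) (simp_all add: ac_simps)
lemma ip_diff1: "ip m (F - G) H = ip m F H - ip m G H"
  by (simp add: minus_sc ip_add1 ip_sc1)
lemma ip_sum1: "ip m (\<lambda>\<alpha> \<beta>. \<Sum>a\<in>A. T a \<alpha> \<beta>) H = (\<Sum>a\<in>A. ip m (T a) H)"
proof -
  have "ip m (\<lambda>\<alpha> \<beta>. \<Sum>a\<in>A. T a \<alpha> \<beta>) H = (\<Sum>x\<in>supp H. \<Sum>a\<in>A. of_nat (wt m (fst x) (snd x)) * T a (fst x) (snd x) * cnj (H (fst x) (snd x)))"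
    by (simp add: ip_def sum_distrib_left sum_distrib_right)
  also have "\<dots> = (\<Sum>a\<in>A. \<Sum>x\<in>supp H. of_nat (wt m (fst x) (snd x)) * T a (fst x) (snd x) * cnj (H (fst x) (snd x)))"
    by (rule sum.swap)
  finally show ?thesis by (simp add: ip_def)
qed
lemma ip_zero2: "ip m F 0 = 0"
  by (simp add: ip_def supp_def)
lemma ip_zero1: "ip m 0 H = 0"
  by (simp add: ip_def)

lemma ip_add2: assumes "is_poly m G" "is_poly m H" shows "ip m F (G + H) = ip m F G + ip m F H"
proof -
  have f: "finite (supp G \<union> supp H)" using assms by (simp add: is_poly_iff)
  have s: "supp (G + H) \<subseteq> supp G \<union> supp H" by (auto simp: supp_def)
  show ?thesis
    using ip_on[OF f s, of m F] ip_on[OF f, of G m F] ip_on[OF f, of H m F]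
    by (simp add: sum.distrib algebra_simps)
qed
lemma ip_sum2: "finite A \<Longrightarrow> (\<And>a. a \<in> A \<Longrightarrow> is_poly m (T a)) \<Longrightarrow>
   ip m F (\<lambda>\<alpha> \<beta>. \<Sum>a\<in>A. T a \<alpha> \<beta>) = (\<Sum>a\<in>A. ip m F (T a))"
proof (induction A rule: finite_induct)
  case empty
  then show ?case using ip_zero2 by (simp add: zero_fun_def)
next
  case (insert x A)
  have e: "(\<lambda>\<alpha> \<beta>. \<Sum>j\<in>insert x A. T j \<alpha> \<beta>) = T x + (\<lambda>\<alpha> \<beta>. \<Sum>j\<in>A. T j \<alpha> \<beta>)"
    using insert by (simp add: fun_eq_iff)
  have P: "is_poly m (\<lambda>\<alpha> \<beta>. \<Sum>j\<in>A. T j \<alpha> \<beta>)" using insert by (intro is_poly_sum) auto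
  have "ip m F (\<lambda>\<alpha> \<beta>. \<Sum>j\<in>insert x A. T j \<alpha> \<beta>) = ip m F (T x) + ip m F (\<lambda>\<alpha> \<beta>. \<Sum>j\<in>A. T j \<alpha> \<beta>)"
    unfolding e by (rule ip_add2[OF _ P]) (use insert in auto)
  then show ?case using insert by simp
qed

lemma wt_updx: "j < m \<Longrightarrow> wt m (\<alpha>(j := Suc (\<alpha> j))) \<beta> = wt m \<alpha> \<beta> * Suc (\<alpha> j)"
proof -
  assume j: "j < m"
  have "(\<Prod>i<m. fact ((\<alpha>(j:=Suc (\<alpha> j))) i)) * fact (\<alpha> j) = (\<Prod>i<m. fact (\<alpha> i)) * (fact (Suc (\<alpha> j)) :: nat)"
    by (rule prod_upd[OF j])
  then have "(\<Prod>i<m. fact ((\<alpha>(j:=Suc (\<alpha> j))) i)) * fact (\<alpha> j) = ((\<Prod>i<m. fact (\<alpha> i)) * Suc (\<alpha> j)) * (fact (\<alpha> j) :: nat)"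
    by (simp add: algebra_simps)
  then have "(\<Prod>i<m. fact ((\<alpha>(j:=Suc (\<alpha> j))) i)) = (\<Prod>i<m. fact (\<alpha> i)) * (Suc (\<alpha> j) :: nat)"
    using fact_gt_zero[of "\<alpha> j"] by (metis mult_right_cancel not_less0 gr_zeroI)
  then show ?thesis by (simp add: wt_def algebra_simps)
qed
lemma wt_updu: "j < m \<Longrightarrow> wt m \<alpha> (\<beta>(j := Suc (\<beta> j))) = wt m \<alpha> \<beta> * Suc (\<beta> j)"
proof -
  assume j: "j < m"
  have "(\<Prod>i<m. fact ((\<beta>(j:=Suc (\<beta> j))) i)) * fact (\<beta> j) = (\<Prod>i<m. fact (\<beta> i)) * (fact (Suc (\<beta> j)) :: nat)"
    by (rule prod_upd[OF j])
  then have "(\<Prod>i<m. fact ((\<beta>(j:=Suc (\<beta> j))) i)) * fact (\<beta> j) = ((\<Prod>i<m. fact (\<beta> i)) * Suc (\<beta> j)) * (fact (\<beta> j) :: nat)"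
    by (simp add: algebra_simps)
  then have "(\<Prod>i<m. fact ((\<beta>(j:=Suc (\<beta> j))) i)) = (\<Prod>i<m. fact (\<beta> i)) * (Suc (\<beta> j) :: nat)"
    using fact_gt_zero[of "\<beta> j"] by (metis mult_right_cancel not_less0 gr_zeroI)
  then show ?thesis by (simp add: wt_def algebra_simps)
qed

lemma ip_adj_x: assumes j: "j < m" and G: "is_poly m G"
  shows "ip m (mulx j F) G = ip m F (dx j G)"
proof -
  define T where "T = supp G \<inter> {x. fst x j \<noteq> 0}"
  have fG: "finite (supp G)" using G by (simp add: is_poly_iff)
  have "ip m (mulx j F) G = (\<Sum>x\<in>T. of_nat (wt m (fst x) (snd x)) * mulx j F (fst x) (snd x) * cnj (G (fst x) (snd x)))"
    unfolding ip_def T_def using fG by (intro sum.mono_neutral_right) (auto simp: mulx_def)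
  also have "\<dots> = (\<Sum>y\<in>supp (dx j G). of_nat (wt m (fst y) (snd y)) * F (fst y) (snd y) * cnj (dx j G (fst y) (snd y)))"
    apply (rule sum.reindex_bij_witness[of _ "\<lambda>y. ((fst y)(j := Suc (fst y j)), snd y)" "\<lambda>x. ((fst x)(j := fst x j - 1), snd x)"])
    apply (auto simp: T_def supp_def dx_def)[4]
    subgoal for a
    proof -
      assume T: "a \<in> T"
    obtain \<alpha> \<beta> where a: "a = (\<alpha>, \<beta>)" by (cases a)
    define \<gamma> where "\<gamma> = \<alpha>(j := \<alpha> j - 1)"
    have nz: "\<alpha> j \<noteq> 0" using T a by (simp add: T_def)
    have ag: "\<alpha> = \<gamma>(j := Suc (\<gamma> j))" using nz by (auto simp: \<gamma>_def)
    have w0: "wt m \<alpha> \<beta> = wt m \<gamma> \<beta> * Suc (\<gamma> j)" using wt_updx[OF j, of \<gamma> \<beta>] ag by metis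
    have w1: "Suc (\<gamma> j) = \<alpha> j" using nz by (simp add: \<gamma>_def)
    have w: "wt m \<alpha> \<beta> = wt m \<gamma> \<beta> * \<alpha> j" using w0 w1 by simp
    have g1: "\<gamma>(j := \<gamma> j + 1) = \<alpha>" using ag by simp
    have gg: "\<alpha>(j := \<alpha> j - Suc 0) = \<gamma>" by (simp add: \<gamma>_def)
    have g2: "\<gamma> j + 1 = \<alpha> j" using nz by (simp add: \<gamma>_def)
    have m1: "mulx j F \<alpha> \<beta> = F \<gamma> \<beta>" using nz by (simp add: mulx_def \<gamma>_def)
    have c1: "of_nat (\<alpha> j) = (1 + of_nat (\<gamma> j) :: complex)" by (simp only: w1[symmetric] of_nat_Suc add.commute)
    have d1: "dx j G \<gamma> \<beta> = of_nat (\<alpha> j) * G \<alpha> \<beta>" by (simp add: dx_def ag[symmetric] c1)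
    show ?thesis unfolding a by (simp add: w m1 d1 gg)
    qed
    done
  also have "\<dots> = ip m F (dx j G)" by (simp add: ip_def)
  finally show ?thesis .
qed

lemma ip_adj_u: assumes j: "j < m" and G: "is_poly m G"
  shows "ip m (mulu j F) G = ip m F (du j G)"
proof -
  define T where "T = supp G \<inter> {x. snd x j \<noteq> 0}"
  have fG: "finite (supp G)" using G by (simp add: is_poly_iff)
  have "ip m (mulu j F) G = (\<Sum>x\<in>T. of_nat (wt m (fst x) (snd x)) * mulu j F (fst x) (snd x) * cnj (G (fst x) (snd x)))"
    unfolding ip_def T_def using fG by (intro sum.mono_neutral_right) (auto simp: mulu_def)
  also have "\<dots> = (\<Sum>y\<in>supp (du j G). of_nat (wt m (fst y) (snd y)) * F (fst y) (snd y) * cnj (du j G (fst y) (snd y)))"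
    apply (rule sum.reindex_bij_witness[of _ "\<lambda>y. (fst y, (snd y)(j := Suc (snd y j)))" "\<lambda>x. (fst x, (snd x)(j := snd x j - 1))"])
    apply (auto simp: T_def supp_def du_def)[4]
    subgoal for a
    proof -
      assume T: "a \<in> T"
    obtain \<alpha> \<beta> where a: "a = (\<alpha>, \<beta>)" by (cases a)
    define \<gamma> where "\<gamma> = \<beta>(j := \<beta> j - 1)"
    have nz: "\<beta> j \<noteq> 0" using T a by (simp add: T_def)
    have ag: "\<beta> = \<gamma>(j := Suc (\<gamma> j))" using nz by (auto simp: \<gamma>_def)
    have w0: "wt m \<alpha> \<beta> = wt m \<alpha> \<gamma> * Suc (\<gamma> j)" using wt_updu[OF j, of \<alpha> \<gamma>] ag by metis
    have w1: "Suc (\<gamma> j) = \<beta> j" using nz by (simp add: \<gamma>_def)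
    have w: "wt m \<alpha> \<beta> = wt m \<alpha> \<gamma> * \<beta> j" using w0 w1 by simp
    have g1: "\<gamma>(j := \<gamma> j + 1) = \<beta>" using ag by simp
    have gg: "\<beta>(j := \<beta> j - Suc 0) = \<gamma>" by (simp add: \<gamma>_def)
    have g2: "\<gamma> j + 1 = \<beta> j" using nz by (simp add: \<gamma>_def)
    have m1: "mulu j F \<alpha> \<beta> = F \<alpha> \<gamma>" using nz by (simp add: mulu_def \<gamma>_def)
    have c1: "of_nat (\<beta> j) = (1 + of_nat (\<gamma> j) :: complex)" by (simp only: w1[symmetric] of_nat_Suc add.commute)
    have d1: "du j G \<alpha> \<gamma> = of_nat (\<beta> j) * G \<alpha> \<beta>" by (simp add: du_def ag[symmetric] c1)
    show ?thesis unfolding a by (simp add: w m1 d1 gg)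
    qed
    done
  also have "\<dots> = ip m F (du j G)" by (simp add: ip_def)
  finally show ?thesis .
qed


lemma lin_lx: "lin (lap_x m)" unfolding lx_sop by (intro lin_sop) (simp add: lin_def)
lemma lin_lu: "lin (lap_u m)" unfolding lu_sop by (intro lin_sop) (simp add: lin_def)
lemma lin_rr: "lin (norm2x m)" unfolding rr_sop by (intro lin_sop) (simp add: lin_def)
lemma lin_ss: "lin (norm2u m)" unfolding ss_sop by (intro lin_sop) (simp add: lin_def)
lemma lin_aa: "lin (aa m)" unfolding aa_def by (intro lin_sop) (simp add: lin_def)
lemma lin_cc: "lin (cc m)" unfolding cc_def by (intro lin_sop) (simp add: lin_def)
lemma lin_sxo: "lin (sxo m)" unfolding sxo_def by (intro lin_sop) (simp add: lin_def)
lemma lin_suo: "lin (suo m)" unfolding suo_def by (intro lin_sop) (simp add: lin_def)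

lemma harm_iff: "harm m F \<longleftrightarrow> lap_x m F = 0 \<and> lap_u m F = 0"
  by (simp add: harm_def zero_poly_0)

lemma ip_rr: assumes G: "is_poly m G" shows "ip m (norm2x m F) G = ip m F (lap_x m G)"
proof -
  have "ip m (norm2x m F) G = (\<Sum>j<m. ip m (mulx j (mulx j F)) G)"
    unfolding norm2x_def by (rule ip_sum1)
  also have "\<dots> = (\<Sum>j<m. ip m F (dx j (dx j G)))"
    by (rule sum.cong) (simp_all add: ip_adj_x is_poly_dx G)
  also have "\<dots> = ip m F (lap_x m G)"
    unfolding lap_x_def by (rule ip_sum2[symmetric]) (simp_all add: is_poly_dx G)
  finally show ?thesis .
qed
lemma ip_ss: assumes G: "is_poly m G" shows "ip m (norm2u m F) G = ip m F (lap_u m G)"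
proof -
  have "ip m (norm2u m F) G = (\<Sum>j<m. ip m (mulu j (mulu j F)) G)"
    unfolding norm2u_def by (rule ip_sum1)
  also have "\<dots> = (\<Sum>j<m. ip m F (du j (du j G)))"
    by (rule sum.cong) (simp_all add: ip_adj_u is_poly_du G)
  also have "\<dots> = ip m F (lap_u m G)"
    unfolding lap_u_def by (rule ip_sum2[symmetric]) (simp_all add: is_poly_du G)
  finally show ?thesis .
qed

definition isdec :: "nat \<Rightarrow> cpoly \<Rightarrow> nat \<Rightarrow> (nat \<Rightarrow> nat \<Rightarrow> cpoly) \<Rightarrow> bool" where
  "isdec m P N Hf \<longleftrightarrow> (\<forall>a b. is_poly m (Hf a b) \<and> harm m (Hf a b)) \<and>
      (\<forall>a b. N \<le> a \<or> N \<le> b \<longrightarrow> Hf a b = zero_poly) \<and>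
      P = (\<lambda>\<alpha> \<beta>. \<Sum>a<N. \<Sum>b<N. ((norm2x m ^^ a) ((norm2u m ^^ b) (Hf a b))) \<alpha> \<beta>)"

lemma pis_alt: "pis m P = (THE H. \<exists>N Hf. isdec m P N Hf \<and> H = Hf 0 0)"
  unfolding pis_def isdec_def by (simp add: conj_assoc)

lemma ip_term0:
  assumes D: "is_poly m D" "harm m D" and ab: "a \<noteq> 0 \<or> b \<noteq> 0"
  shows "ip m ((norm2x m ^^ a) ((norm2u m ^^ b) X)) D = 0"
proof (cases a)
  case (Suc a')
  then have "ip m ((norm2x m ^^ a) ((norm2u m ^^ b) X)) D = ip m ((norm2x m ^^ a') ((norm2u m ^^ b) X)) (lap_x m D)"
    using ip_rr[OF D(1)] by simp
  then show ?thesis using D(2) by (simp add: harm_iff ip_zero2)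
next
  case 0
  then obtain b' where b: "b = Suc b'" using ab by (cases b) auto
  then have "ip m ((norm2x m ^^ a) ((norm2u m ^^ b) X)) D = ip m ((norm2u m ^^ b') X) (lap_u m D)"
    using ip_ss[OF D(1)] 0 by simp
  then show ?thesis using D(2) by (simp add: harm_iff ip_zero2)
qed

lemma ip_term0u:
  assumes D: "is_poly m D" "harm m D" and b: "b \<noteq> 0"
  shows "ip m ((norm2u m ^^ b) X) D = 0"
  using ip_term0[OF D, of 0 b X] b by simp

lemma sum_delta00: "(\<Sum>a<(N::nat). \<Sum>b<N. if a = 0 then if b = 0 then c else 0 else (0::complex)) = (if 0 < N then c else 0)"
proof (cases N)
  case 0 then show ?thesis by simp
next
  case (Suc n)
  have "(\<Sum>a<Suc n. \<Sum>b<Suc n. if a = 0 then if b = 0 then c else 0 else (0::complex)) = (\<Sum>b<Suc n. if b = 0 then c else 0)"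
    by (subst sum.lessThan_Suc_shift) simp
  also have "\<dots> = c" by (subst sum.lessThan_Suc_shift) simp
  finally show ?thesis using Suc by simp
qed

lemma dec_ip:
  assumes dec: "isdec m P N Hf" and D: "is_poly m D" "harm m D"
  shows "ip m P D = ip m (Hf 0 0) D"
proof -
  have P: "P = (\<lambda>\<alpha> \<beta>. \<Sum>a<N. \<Sum>b<N. ((norm2x m ^^ a) ((norm2u m ^^ b) (Hf a b))) \<alpha> \<beta>)"
    using dec by (simp add: isdec_def)
  have "ip m P D = (\<Sum>a<N. ip m (\<lambda>\<alpha> \<beta>. \<Sum>b<N. ((norm2x m ^^ a) ((norm2u m ^^ b) (Hf a b))) \<alpha> \<beta>) D)"
    unfolding P by (rule ip_sum1)
  also have "\<dots> = (\<Sum>a<N. \<Sum>b<N. ip m ((norm2x m ^^ a) ((norm2u m ^^ b) (Hf a b))) D)"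
    by (rule sum.cong) (simp_all add: ip_sum1)
  also have "\<dots> = (\<Sum>a<N. \<Sum>b<N. (if a = 0 then (if b = 0 then ip m (Hf 0 0) D else 0) else 0))"
    by (rule sum.cong, simp, rule sum.cong, simp) (auto simp: ip_term0[OF D] ip_term0u[OF D])
  also have "\<dots> = (if 0 < N then ip m (Hf 0 0) D else 0)"
    by (rule sum_delta00)
  also have "\<dots> = ip m (Hf 0 0) D"
    using dec by (auto simp: isdec_def zero_poly_0 ip_zero1)
  finally show ?thesis .
qed

lemma wt_pos: "0 < wt m \<alpha> \<beta>"
  by (simp add: wt_def)

lemma ip_self_zero: assumes D: "is_poly m D" and z: "ip m D D = 0" shows "D = 0"
proof -
  have fin: "finite (supp D)" using D by (simp add: is_poly_iff)
  have t: "of_nat (wt m (fst x) (snd x)) * D (fst x) (snd x) * cnj (D (fst x) (snd x)) =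
        complex_of_real (real (wt m (fst x) (snd x)) * (cmod (D (fst x) (snd x)))\<^sup>2)" for x
    by (metis complex_norm_square mult.assoc of_real_mult of_real_of_nat_eq)
  have "ip m D D = complex_of_real (\<Sum>x\<in>supp D. real (wt m (fst x) (snd x)) * (cmod (D (fst x) (snd x)))\<^sup>2)"
    unfolding ip_def t of_real_sum by (rule refl)
  then have "complex_of_real (\<Sum>x\<in>supp D. real (wt m (fst x) (snd x)) * (cmod (D (fst x) (snd x)))\<^sup>2) = 0"
    using z by simp
  then have "(\<Sum>x\<in>supp D. real (wt m (fst x) (snd x)) * (cmod (D (fst x) (snd x)))\<^sup>2) = 0"
    using z by (simp only: of_real_eq_0_iff)
  then have "\<forall>x\<in>supp D. real (wt m (fst x) (snd x)) * (cmod (D (fst x) (snd x)))\<^sup>2 = 0"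
    using fin by (subst sum_nonneg_eq_0_iff[symmetric]) auto
  then have "\<forall>x\<in>supp D. D (fst x) (snd x) = 0"
    using wt_pos[of m] by (metis (no_types, lifting) mult_eq_0_iff norm_eq_zero of_nat_0_less_iff
        order_less_irrefl power_eq_0_iff)
  then have "supp D = {}" by (auto simp: supp_def)
  then show ?thesis by (auto simp: supp_def fun_eq_iff)
qed

lemma dec_unique: assumes d1: "isdec m P N1 H1" and d2: "isdec m P N2 H2" shows "H1 0 0 = H2 0 0"
proof -
  define D where "D = H1 0 0 - H2 0 0"
  have p1: "is_poly m (H1 0 0)" "harm m (H1 0 0)" using d1 by (auto simp: isdec_def)
  have p2: "is_poly m (H2 0 0)" "harm m (H2 0 0)" using d2 by (auto simp: isdec_def)
  have pD: "is_poly m D" unfolding D_def using p1 p2 by (simp add: is_poly_diff)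
  have hD: "harm m D" unfolding D_def using p1 p2
    by (simp add: harm_iff lin_minus[OF lin_lx] lin_minus[OF lin_lu])
  have "ip m D D = ip m (H1 0 0) D - ip m (H2 0 0) D" unfolding D_def by (rule ip_diff1)
  also have "\<dots> = ip m P D - ip m P D" using dec_ip[OF d1 pD hD] dec_ip[OF d2 pD hD] by simp
  finally have "D = 0" using ip_self_zero[OF pD] by simp
  then show ?thesis unfolding D_def by simp
qed

lemma pis_eq: assumes d: "isdec m P N Hf" shows "pis m P = Hf 0 0"
  unfolding pis_alt
proof (rule the_equality)
  show "\<exists>N' Hf'. isdec m P N' Hf' \<and> Hf 0 0 = Hf' 0 0" using d by blast
next
  fix H assume "\<exists>N' Hf'. isdec m P N' Hf' \<and> H = Hf' 0 0"
  then show "H = Hf 0 0" using dec_unique[OF _ d] by blast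
qed

lemma harm_zero: "harm m 0" by (simp add: harm_iff lin_zero[OF lin_lx] lin_zero[OF lin_lu])

lemma pis_dec4:
  assumes h: "is_poly m h0" "harm m h0" "is_poly m h1" "harm m h1" "is_poly m h2" "harm m h2"
     "is_poly m h3" "harm m h3"
    and P: "P = h0 + norm2x m h1 + norm2u m h2 + norm2x m (norm2u m h3)"
  shows "pis m P = h0"
proof -
  define Hf where "Hf = (\<lambda>(a::nat) (b::nat). if a = 0 \<and> b = 0 then h0 else if a = 1 \<and> b = 0 then h1
     else if a = 0 \<and> b = 1 then h2 else if a = 1 \<and> b = 1 then h3 else zero_poly)"
  have "isdec m P 2 Hf"
    unfolding isdec_def
  proof (intro conjI allI impI)
    fix a b show "is_poly m (Hf a b)" "harm m (Hf a b)"
      using h by (auto simp: Hf_def zero_poly_0 is_poly_zero harm_zero)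
  next
    fix a b :: nat assume "2 \<le> a \<or> 2 \<le> b" then show "Hf a b = zero_poly" by (auto simp: Hf_def)
  next
    show "P = (\<lambda>\<alpha> \<beta>. \<Sum>a<2. \<Sum>b<2. ((norm2x m ^^ a) ((norm2u m ^^ b) (Hf a b))) \<alpha> \<beta>)"
      unfolding P by (simp add: fun_eq_iff numeral_2_eq_2 lessThan_Suc Hf_def algebra_simps)
  qed
  then show ?thesis using pis_eq by (force simp: Hf_def)
qed

lemma pis_harm: "is_poly m h \<Longrightarrow> harm m h \<Longrightarrow> pis m h = h"
  by (rule pis_dec4[of m h 0 0 0]) (simp_all add: is_poly_zero harm_zero lin_zero[OF lin_rr] lin_zero[OF lin_ss])


lemma lin_exo: "lin (exo m)" unfolding exo_def by (intro lin_sop) (simp add: lin_def)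
lemma lin_euo: "lin (euo m)" unfolding euo_def by (intro lin_sop) (simp add: lin_def)

lemma aa_lin[simp]: "aa m (F + G) = aa m F + aa m G" "aa m (F - G) = aa m F - aa m G"
  "aa m (sc k F) = sc k (aa m F)" "aa m 0 = 0"
  by (simp_all add: lin_add[OF lin_aa] lin_minus[OF lin_aa] lin_sc[OF lin_aa] lin_zero[OF lin_aa])
lemma cc_lin[simp]: "cc m (F + G) = cc m F + cc m G" "cc m (F - G) = cc m F - cc m G"
  "cc m (sc k F) = sc k (cc m F)" "cc m 0 = 0"
  by (simp_all add: lin_add[OF lin_cc] lin_minus[OF lin_cc] lin_sc[OF lin_cc] lin_zero[OF lin_cc])
lemma sxo_lin[simp]: "sxo m (F + G) = sxo m F + sxo m G" "sxo m (F - G) = sxo m F - sxo m G"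
  "sxo m (sc k F) = sc k (sxo m F)" "sxo m 0 = 0"
  by (simp_all add: lin_add[OF lin_sxo] lin_minus[OF lin_sxo] lin_sc[OF lin_sxo] lin_zero[OF lin_sxo])
lemma suo_lin[simp]: "suo m (F + G) = suo m F + suo m G" "suo m (F - G) = suo m F - suo m G"
  "suo m (sc k F) = sc k (suo m F)" "suo m 0 = 0"
  by (simp_all add: lin_add[OF lin_suo] lin_minus[OF lin_suo] lin_sc[OF lin_suo] lin_zero[OF lin_suo])
lemma rr_lin[simp]: "norm2x m (F + G) = norm2x m F + norm2x m G" "norm2x m (F - G) = norm2x m F - norm2x m G"
  "norm2x m (sc k F) = sc k (norm2x m F)" "norm2x m 0 = 0"
  by (simp_all add: lin_add[OF lin_rr] lin_minus[OF lin_rr] lin_sc[OF lin_rr] lin_zero[OF lin_rr])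
lemma ss_lin[simp]: "norm2u m (F + G) = norm2u m F + norm2u m G" "norm2u m (F - G) = norm2u m F - norm2u m G"
  "norm2u m (sc k F) = sc k (norm2u m F)" "norm2u m 0 = 0"
  by (simp_all add: lin_add[OF lin_ss] lin_minus[OF lin_ss] lin_sc[OF lin_ss] lin_zero[OF lin_ss])
lemma lx_lin[simp]: "lap_x m (F + G) = lap_x m F + lap_x m G" "lap_x m (F - G) = lap_x m F - lap_x m G"
  "lap_x m (sc k F) = sc k (lap_x m F)" "lap_x m 0 = 0"
  by (simp_all add: lin_add[OF lin_lx] lin_minus[OF lin_lx] lin_sc[OF lin_lx] lin_zero[OF lin_lx])
lemma lu_lin[simp]: "lap_u m (F + G) = lap_u m F + lap_u m G" "lap_u m (F - G) = lap_u m F - lap_u m G"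
  "lap_u m (sc k F) = sc k (lap_u m F)" "lap_u m 0 = 0"
  by (simp_all add: lin_add[OF lin_lu] lin_minus[OF lin_lu] lin_sc[OF lin_lu] lin_zero[OF lin_lu])
lemma exo_lin[simp]: "exo m (F + G) = exo m F + exo m G" "exo m (F - G) = exo m F - exo m G"
  "exo m (sc k F) = sc k (exo m F)" "exo m 0 = 0"
  by (simp_all add: lin_add[OF lin_exo] lin_minus[OF lin_exo] lin_sc[OF lin_exo] lin_zero[OF lin_exo])
lemma euo_lin[simp]: "euo m (F + G) = euo m F + euo m G" "euo m (F - G) = euo m F - euo m G"
  "euo m (sc k F) = sc k (euo m F)" "euo m 0 = 0"
  by (simp_all add: lin_add[OF lin_euo] lin_minus[OF lin_euo] lin_sc[OF lin_euo] lin_zero[OF lin_euo])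

lemma sc_zero[simp]: "sc k 0 = 0" by (simp add: sc_def zero_fun_def)

lemma C22': "suo m (sxo m F) = sxo m (suo m F) - exo m F + euo m F"
  using C22[of m F] by (simp add: algebra_simps)

lemmas CS = C1 C2 C3 C4 C5 C6 C7 C8 C9 C10 C11 C12 C13 C14 C15 C16 C17 C18 C19 C20 C21 C22' C24[symmetric]

definition P1 :: "nat \<Rightarrow> int \<Rightarrow> complex" where "P1 m p = 2 * of_int p + of_nat m - 2"

definition "SxF m p G = sxo m G - sc (1 / P1 m p) (norm2x m (aa m G))"
definition "SuF m q G = suo m G - sc (1 / P1 m q) (norm2u m (aa m G))"
definition "CF m p q G = cc m G - sc (1 / P1 m p) (norm2x m (SuF m q G))
   - sc (1 / P1 m q) (norm2u m (SxF m p G)) - sc (1 / (P1 m p * P1 m q)) (norm2x m (norm2u m (aa m G)))"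

lemma SxF_harm: assumes "harm m G" "degx m G p" "P1 m p \<noteq> 0" shows "harm m (SxF m p G)"
proof -
  have h: "lap_x m G = 0" "lap_u m G = 0" using assms by (simp_all add: harm_iff)
  have e: "exo m (aa m G) = sc (of_int (p - 1)) (aa m G)" by (rule exo_deg[OF degx_aa[OF assms(2)]])
  have "lap_x m (SxF m p G) = 0"
    unfolding SxF_def using assms(3) apply (simp add: CS h e) apply (simp add: fun_eq_iff sc_def field_simps) by (simp add: P1_def algebra_simps)
  moreover have "lap_u m (SxF m p G) = 0"
    unfolding SxF_def by (simp add: CS h)
  ultimately show ?thesis by (simp add: harm_iff)
qed
lemma SuF_harm: assumes "harm m G" "degu m G q" "P1 m q \<noteq> 0" shows "harm m (SuF m q G)"
proof -
  have h: "lap_x m G = 0" "lap_u m G = 0" using assms by (simp_all add: harm_iff)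
  have e: "euo m (aa m G) = sc (of_int (q - 1)) (aa m G)" by (rule euo_deg[OF degu_aa[OF assms(2)]])
  have "lap_u m (SuF m q G) = 0"
    unfolding SuF_def using assms(3) apply (simp add: CS h e) apply (simp add: fun_eq_iff sc_def field_simps) by (simp add: P1_def algebra_simps)
  moreover have "lap_x m (SuF m q G) = 0"
    unfolding SuF_def by (simp add: CS h)
  ultimately show ?thesis by (simp add: harm_iff)
qed

lemma harm_aa: "harm m G \<Longrightarrow> harm m (aa m G)"
  by (simp add: harm_iff CS)
lemma harm_sc: "harm m G \<Longrightarrow> harm m (sc k G)"
  by (simp add: harm_iff)

lemma CF_harm: assumes "harm m G" "degx m G p" "degu m G q" "P1 m p \<noteq> 0" "P1 m q \<noteq> 0"
  shows "harm m (CF m p q G)"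
proof -
  have h: "lap_x m G = 0" "lap_u m G = 0" using assms by (simp_all add: harm_iff)
  have e: "exo m (suo m G) = sc (of_int (p - 1)) (suo m G)"
          "exo m (norm2u m (aa m G)) = sc (of_int (p - 1)) (norm2u m (aa m G))"
          "exo m (aa m G) = sc (of_int (p - 1)) (aa m G)"
          "euo m (sxo m G) = sc (of_int (q - 1)) (sxo m G)"
          "euo m (norm2x m (aa m G)) = sc (of_int (q - 1)) (norm2x m (aa m G))"
          "euo m (aa m G) = sc (of_int (q - 1)) (aa m G)"
    apply (rule exo_deg, rule degx_suo, rule assms(2))
    apply (rule exo_deg, rule degx_ss, rule degx_aa, rule assms(2))
    apply (rule exo_deg, rule degx_aa, rule assms(2))
    apply (rule euo_deg, rule degu_sxo, rule assms(3))
    apply (rule euo_deg, rule degu_rr, rule degu_aa, rule assms(3))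
    apply (rule euo_deg, rule degu_aa, rule assms(3))
    done
  have "lap_x m (CF m p q G) = 0"
    unfolding CF_def SxF_def SuF_def using assms(4,5)
    apply (simp add: CS h e) apply (simp add: fun_eq_iff sc_def field_simps) by (simp add: P1_def algebra_simps)
  moreover have "lap_u m (CF m p q G) = 0"
    unfolding CF_def SxF_def SuF_def using assms(4,5)
    apply (simp add: CS h e) apply (simp add: fun_eq_iff sc_def field_simps) by (simp add: P1_def algebra_simps)
  ultimately show ?thesis by (simp add: harm_iff)
qed


lemma main_id:
  assumes "harm m G" "degx m G p" "degu m G q"
    and nz: "P1 m p \<noteq> 0" "P1 m q \<noteq> 0" "P1 m (p - 1) \<noteq> 0" "P1 m (q - 1) \<noteq> 0"
  defines "hx \<equiv> - (of_int p + of_nat m / 2 :: complex)" and "hu \<equiv> - (of_int q + of_nat m / 2 :: complex)"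
  shows "aa m (CF m p q G) =
     sc ((hx + hx * hu + hu) / ((hx + 1) * (hu + 1))) (CF m (p - 1) (q - 1) (aa m G))
     - sc (hx + hu) G + sc (1 / (hx + 1)) (SxF m (p - 1) (SuF m q G))
     + sc (1 / (hu + 1)) (SuF m (q - 1) (SxF m p G))"
proof -
  have h: "lap_x m G = 0" "lap_u m G = 0" using assms by (simp_all add: harm_iff)
  have e: "exo m G = sc (of_int p) G" "euo m G = sc (of_int q) G"
    by (rule exo_deg, rule assms(2)) (rule euo_deg, rule assms(3))
  have hx1: "hx + 1 = - P1 m p / 2" unfolding hx_def P1_def by (simp add: field_simps)
  have hu1: "hu + 1 = - P1 m q / 2" unfolding hu_def P1_def by (simp add: field_simps)
  have hxu: "hx + hu = - (of_int p + of_int q + of_nat m)" unfolding hx_def hu_def by (simp add: field_simps)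
  have k0: "hx + hx * hu + hu = (hx + 1) * (hu + 1) - 1" by (simp add: algebra_simps)
  have k1: "(hx + 1) * (hu + 1) = P1 m p * P1 m q / 4" by (simp add: hx1 hu1)
  have k: "(hx + hx * hu + hu) / ((hx + 1) * (hu + 1)) = 1 - 4 / (P1 m p * P1 m q)"
    unfolding k0 k1 using nz(1,2) by (simp add: field_simps)
  have r1: "P1 m (p - 1) = P1 m p - 2" "P1 m (q - 1) = P1 m q - 2" by (simp_all add: P1_def algebra_simps)
  have r2: "of_int p = (P1 m p - of_nat m + 2) / 2" "of_int q = (P1 m q - of_nat m + 2) / 2"
    by (simp_all add: P1_def field_simps)
  have nz3: "P1 m p - 2 \<noteq> 0" "P1 m q - 2 \<noteq> 0" using nz(3,4) r1 by simp_all
  show ?thesis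
    unfolding k
    unfolding hxu hx1 hu1 CF_def SxF_def SuF_def
    apply (simp add: CS h e)
    apply (simp add: fun_eq_iff sc_def r2)
    using nz apply (simp add: field_simps)
    apply (simp add: r1 algebra_simps)
    done
qed


definition D4 :: "nat \<Rightarrow> cpoly \<Rightarrow> cpoly \<Rightarrow> bool" where
  "D4 m T h \<longleftrightarrow> is_poly m h \<and> harm m h \<and> (\<exists>h1 h2 h3. is_poly m h1 \<and> harm m h1 \<and> is_poly m h2 \<and> harm m h2 \<and>
     is_poly m h3 \<and> harm m h3 \<and> T = h + norm2x m h1 + norm2u m h2 + norm2x m (norm2u m h3))"

lemma D4I: "is_poly m h \<Longrightarrow> harm m h \<Longrightarrow> is_poly m ha \<Longrightarrow> harm m ha \<Longrightarrow> is_poly m hb \<Longrightarrow> harm m hb \<Longrightarrow>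
  is_poly m hc \<Longrightarrow> harm m hc \<Longrightarrow> T = h + norm2x m ha + norm2u m hb + norm2x m (norm2u m hc) \<Longrightarrow> D4 m T h"
  unfolding D4_def by blast

lemma D4_pis: "D4 m T h \<Longrightarrow> pis m T = h"
  unfolding D4_def using pis_dec4 by blast

lemma harm_add: "harm m F \<Longrightarrow> harm m G \<Longrightarrow> harm m (F + G)" by (simp add: harm_iff)
lemma harm_diff: "harm m F \<Longrightarrow> harm m G \<Longrightarrow> harm m (F - G)" by (simp add: harm_iff)

lemma D4_add: assumes "D4 m T1 g1" "D4 m T2 g2" shows "D4 m (T1 + T2) (g1 + g2)"
proof -
  obtain a1 a2 a3 where A: "is_poly m a1" "harm m a1" "is_poly m a2" "harm m a2" "is_poly m a3" "harm m a3"
    "T1 = g1 + norm2x m a1 + norm2u m a2 + norm2x m (norm2u m a3)" using assms(1) unfolding D4_def by blast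
  obtain b1 b2 b3 where B: "is_poly m b1" "harm m b1" "is_poly m b2" "harm m b2" "is_poly m b3" "harm m b3"
    "T2 = g2 + norm2x m b1 + norm2u m b2 + norm2x m (norm2u m b3)" using assms(2) unfolding D4_def by blast
  have "T1 + T2 = (g1 + g2) + norm2x m (a1 + b1) + norm2u m (a2 + b2) + norm2x m (norm2u m (a3 + b3))"
    using A(7) B(7) by (simp add: algebra_simps)
  then show ?thesis using assms A B unfolding D4_def
    by (intro conjI exI[of _ "a1 + b1"] exI[of _ "a2 + b2"] exI[of _ "a3 + b3"])
       (auto intro: is_poly_add harm_add)
qed
lemma D4_zero: "D4 m 0 0"
  by (rule D4I[where ha=0 and hb=0 and hc=0]) (simp_all add: is_poly_zero harm_zero)

lemma D4_sum: "finite K \<Longrightarrow> (\<And>k. k \<in> K \<Longrightarrow> D4 m (T k) (h k)) \<Longrightarrow> D4 m (\<Sum>k\<in>K. T k) (\<Sum>k\<in>K. h k)"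
proof (induction K rule: finite_induct)
  case empty then show ?case using D4_zero[of m] by (simp add: zero_fun_def)
next
  case (insert x K)
  show ?case unfolding sum.insert[OF insert(1,2)]
    by (rule D4_add) (use insert in auto)
qed

lemma is_poly_SxF: "is_poly m G \<Longrightarrow> is_poly m (SxF m p G)"
  unfolding SxF_def by (intro is_poly_diff is_poly_sc is_poly_sxo is_poly_rr is_poly_aa)
lemma is_poly_SuF: "is_poly m G \<Longrightarrow> is_poly m (SuF m p G)"
  unfolding SuF_def by (intro is_poly_diff is_poly_sc is_poly_suo is_poly_ss is_poly_aa)
lemma is_poly_CF: "is_poly m G \<Longrightarrow> is_poly m (CF m p q G)"
  unfolding CF_def by (intro is_poly_diff is_poly_sc is_poly_cc is_poly_rr is_poly_ss is_poly_aa is_poly_SxF is_poly_SuF)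

lemma degx_SxF: "degx m G p \<Longrightarrow> degx m (SxF m k G) (p + 1)"
proof -
  assume d: "degx m G p"
  have "degx m (norm2x m (aa m G)) (p - 1 + 2)" by (intro degx_rr degx_aa d)
  then have "degx m (norm2x m (aa m G)) (p + 1)" by (simp add: algebra_simps)
  then show ?thesis unfolding SxF_def by (intro degx_diff degx_sc degx_sxo d)
qed
lemma degu_SxF: "degu m G q \<Longrightarrow> degu m (SxF m k G) (q - 1)"
  unfolding SxF_def by (intro degu_diff degu_sc degu_sxo degu_rr degu_aa)
lemma degu_SuF: "degu m G q \<Longrightarrow> degu m (SuF m k G) (q + 1)"
proof -
  assume d: "degu m G q"
  have "degu m (norm2u m (aa m G)) (q - 1 + 2)" by (intro degu_ss degu_aa d)
  then have "degu m (norm2u m (aa m G)) (q + 1)" by (simp add: algebra_simps)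
  then show ?thesis unfolding SuF_def by (intro degu_diff degu_sc degu_suo d)
qed
lemma degx_SuF: "degx m G p \<Longrightarrow> degx m (SuF m k G) (p - 1)"
  unfolding SuF_def by (intro degx_diff degx_sc degx_suo degx_ss degx_aa)
lemma degx_CF: assumes d: "degx m G p" shows "degx m (CF m k l G) (p + 1)"
proof -
  have 1: "degx m (norm2x m (SuF m l G)) (p + 1)"
    using degx_rr[OF degx_SuF[OF d]] by (simp add: algebra_simps)
  have 2: "degx m (norm2x m (norm2u m (aa m G))) (p + 1)"
    using degx_rr[OF degx_ss[OF degx_aa[OF d]]] by (simp add: algebra_simps)
  show ?thesis unfolding CF_def
    by (intro degx_diff degx_sc degx_cc d 1 2 degx_ss degx_SxF)
qed
lemma degu_CF: assumes d: "degu m G q" shows "degu m (CF m k l G) (q + 1)"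
proof -
  have 1: "degu m (norm2u m (SxF m k G)) (q + 1)"
    using degu_ss[OF degu_SxF[OF d]] by (simp add: algebra_simps)
  have 2: "degu m (norm2x m (norm2u m (aa m G))) (q + 1)"
    using degu_rr[OF degu_ss[OF degu_aa[OF d]]] by (simp add: algebra_simps)
  show ?thesis unfolding CF_def
    by (intro degu_diff degu_sc degu_cc d 1 2 degu_rr degu_SuF)
qed

lemma D4_aa: "is_poly m G \<Longrightarrow> harm m G \<Longrightarrow> D4 m (aa m G) (aa m G)"
  by (rule D4I[where ha=0 and hb=0 and hc=0]) (simp_all add: is_poly_zero harm_zero is_poly_aa harm_aa)
lemma D4_harm: "is_poly m G \<Longrightarrow> harm m G \<Longrightarrow> D4 m G G"
  by (rule D4I[where ha=0 and hb=0 and hc=0]) (simp_all add: is_poly_zero harm_zero)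

lemma D4_sxo: assumes "is_poly m G" "harm m G" "degx m G p" "P1 m p \<noteq> 0"
  shows "D4 m (sxo m G) (SxF m p G)"
  apply (rule D4I[where ha="sc (1 / P1 m p) (aa m G)" and hb=0 and hc=0])
  using assms apply (simp_all add: is_poly_SxF SxF_harm is_poly_sc is_poly_aa harm_sc harm_aa is_poly_zero harm_zero)
  by (simp add: SxF_def)
lemma D4_suo: assumes "is_poly m G" "harm m G" "degu m G q" "P1 m q \<noteq> 0"
  shows "D4 m (suo m G) (SuF m q G)"
  apply (rule D4I[where ha=0 and hb="sc (1 / P1 m q) (aa m G)" and hc=0])
  using assms apply (simp_all add: is_poly_SuF SuF_harm is_poly_sc is_poly_aa harm_sc harm_aa is_poly_zero harm_zero)
  by (simp add: SuF_def)
lemma D4_cc: assumes "is_poly m G" "harm m G" "degx m G p" "degu m G q" "P1 m p \<noteq> 0" "P1 m q \<noteq> 0"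
  shows "D4 m (cc m G) (CF m p q G)"
  apply (rule D4I[where ha="sc (1 / P1 m p) (SuF m q G)" and hb="sc (1 / P1 m q) (SxF m p G)"
     and hc="sc (1 / (P1 m p * P1 m q)) (aa m G)"])
  using assms apply (simp_all add: is_poly_CF CF_harm is_poly_SuF SuF_harm is_poly_SxF SxF_harm is_poly_sc
      is_poly_aa harm_sc harm_aa)
  by (simp add: CF_def)


definition restr :: "nat \<Rightarrow> nat \<Rightarrow> nat \<Rightarrow> nat \<Rightarrow> nat \<Rightarrow> cpoly \<Rightarrow> cpoly" where
  "restr m p q a b F = (\<lambda>\<alpha> \<beta>. if (\<Sum>i<m. \<alpha> i) + a = p \<and> (\<Sum>i<m. \<beta> i) + b = q then F \<alpha> \<beta> else 0)"

lemma sum_upd1: "(j::nat) < m \<Longrightarrow> (\<Sum>i<m. ((\<alpha>::nat\<Rightarrow>nat)(j := \<alpha> j + 1)) i) = (\<Sum>i<m. \<alpha> i) + 1"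
  using sum_upd[of j m \<alpha> "\<alpha> j + 1"] by simp

lemma dx_restr: assumes j: "j < m" shows "dx j (restr m p q a b F) = restr m p q (a + 1) b (dx j F)"
proof (rule ext, rule ext)
  fix \<alpha> \<beta> :: "nat \<Rightarrow> nat"
  have s: "(\<Sum>i<m. (\<alpha>(j := \<alpha> j + 1)) i) = (\<Sum>i<m. \<alpha> i) + 1" using sum_upd[OF j, of \<alpha> "\<alpha> j + 1"] by simp
  show "dx j (restr m p q a b F) \<alpha> \<beta> = restr m p q (a + 1) b (dx j F) \<alpha> \<beta>"
    unfolding dx_def restr_def s by simp
qed
lemma du_restr: assumes j: "j < m" shows "du j (restr m p q a b F) = restr m p q a (b + 1) (du j F)"
proof (rule ext, rule ext)
  fix \<alpha> \<beta> :: "nat \<Rightarrow> nat"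
  have s: "(\<Sum>i<m. (\<beta>(j := \<beta> j + 1)) i) = (\<Sum>i<m. \<beta> i) + 1" using sum_upd[OF j, of \<beta> "\<beta> j + 1"] by simp
  show "du j (restr m p q a b F) \<alpha> \<beta> = restr m p q a (b + 1) (du j F) \<alpha> \<beta>"
    unfolding du_def restr_def s by simp
qed

lemma restr_sum: "(\<lambda>\<alpha> \<beta>. \<Sum>j<m. restr m p q a b (G j) \<alpha> \<beta>) = restr m p q a b (\<lambda>\<alpha> \<beta>. \<Sum>j<m. G j \<alpha> \<beta>)"
  unfolding restr_def by (auto simp: fun_eq_iff intro: sum.neutral)

lemma lx_restr: "lap_x m (restr m p q 0 0 F) = restr m p q 2 0 (lap_x m F)"
proof -
  have "lap_x m (restr m p q 0 0 F) = (\<lambda>\<alpha> \<beta>. \<Sum>j<m. restr m p q 2 0 (dx j (dx j F)) \<alpha> \<beta>)"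
    unfolding lap_x_def by (rule ext, rule ext, rule sum.cong) (simp_all add: dx_restr numeral_2_eq_2)
  also have "\<dots> = restr m p q 2 0 (lap_x m F)" unfolding restr_sum lap_x_def ..
  finally show ?thesis .
qed
lemma lu_restr: "lap_u m (restr m p q 0 0 F) = restr m p q 0 2 (lap_u m F)"
proof -
  have "lap_u m (restr m p q 0 0 F) = (\<lambda>\<alpha> \<beta>. \<Sum>j<m. restr m p q 0 2 (du j (du j F)) \<alpha> \<beta>)"
    unfolding lap_u_def by (rule ext, rule ext, rule sum.cong) (simp_all add: du_restr numeral_2_eq_2)
  also have "\<dots> = restr m p q 0 2 (lap_u m F)" unfolding restr_sum lap_u_def ..
  finally show ?thesis .
qed

lemma restr_zero: "restr m p q a b 0 = 0" by (simp add: restr_def fun_eq_iff)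

lemma harm_restr: "harm m F \<Longrightarrow> harm m (restr m p q 0 0 F)"
  by (simp add: harm_iff lx_restr lu_restr restr_zero)

lemma is_poly_restr: assumes "is_poly m F" shows "is_poly m (restr m p q a b F)"
proof -
  have "supp (restr m p q a b F) \<subseteq> supp F" by (auto simp: supp_def restr_def)
  moreover have "finite (supp F)" using assms by (simp add: is_poly_iff)
  ultimately have "finite (supp (restr m p q a b F))" by (rule finite_subset)
  moreover have "\<forall>\<alpha> \<beta>. restr m p q a b F \<alpha> \<beta> \<noteq> 0 \<longrightarrow> (\<forall>i\<ge>m. \<alpha> i = 0 \<and> \<beta> i = 0)"
    using assms unfolding is_poly_iff restr_def by (auto split: if_splits)
  ultimately show ?thesis by (simp add: is_poly_iff)
qed

lemma degx_restr: "degx m (restr m p q 0 0 F) (int p)"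
  by (auto simp: degx_def restr_def split: if_splits)
lemma degu_restr: "degu m (restr m p q 0 0 F) (int q)"
  by (auto simp: degu_def restr_def split: if_splits)

lemma fsum_apply: "finite K \<Longrightarrow> (\<Sum>k\<in>K. f k) \<alpha> \<beta> = (\<Sum>k\<in>K. (f k :: cpoly) \<alpha> \<beta>)"
  by (induction K rule: finite_induct) simp_all

lemma lin_fsum: assumes "lin Op" shows "finite K \<Longrightarrow> Op (\<Sum>k\<in>K. f k) = (\<Sum>k\<in>K. Op (f k))"
proof (induction K rule: finite_induct)
  case empty show ?case by (simp only: sum.empty lin_zero[OF assms])
next
  case (insert x K) show ?case unfolding sum.insert[OF insert(1,2)] lin_add[OF assms] insert(3) ..
qed

lemma restr_decomp: assumes "is_poly m P"
  defines "K \<equiv> (\<lambda>x. ((\<Sum>i<m. fst x i), (\<Sum>i<m. snd x i))) ` supp P"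
  shows "finite K" "P = (\<Sum>k\<in>K. restr m (fst k) (snd k) 0 0 P)"
proof -
  show fK: "finite K" using assms by (simp add: K_def is_poly_iff)
  show "P = (\<Sum>k\<in>K. restr m (fst k) (snd k) 0 0 P)"
  proof (rule ext, rule ext)
    fix \<alpha> \<beta> :: "nat \<Rightarrow> nat"
    have "(\<Sum>k\<in>K. restr m (fst k) (snd k) 0 0 P) \<alpha> \<beta> = (\<Sum>k\<in>K. restr m (fst k) (snd k) 0 0 P \<alpha> \<beta>)"
      by (rule fsum_apply[OF fK])
    also have "\<dots> = (\<Sum>k\<in>K. if k = ((\<Sum>i<m. \<alpha> i), (\<Sum>i<m. \<beta> i)) then P \<alpha> \<beta> else 0)"
      by (rule sum.cong) (auto simp: restr_def)
    also have "\<dots> = (if ((\<Sum>i<m. \<alpha> i), (\<Sum>i<m. \<beta> i)) \<in> K then P \<alpha> \<beta> else 0)"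
      by (rule sum.delta[OF fK])
    also have "\<dots> = P \<alpha> \<beta>"
    proof -
      have "P \<alpha> \<beta> \<noteq> 0 \<Longrightarrow> ((\<Sum>i<m. \<alpha> i), (\<Sum>i<m. \<beta> i)) \<in> K"
        unfolding K_def supp_def by (rule image_eqI[of _ _ "(\<alpha>, \<beta>)"]) auto
      then show ?thesis by auto
    qed
    finally show "P \<alpha> \<beta> = (\<Sum>k\<in>K. restr m (fst k) (snd k) 0 0 P) \<alpha> \<beta>" by simp
  qed
qed

lemma P1_nz: assumes "m > 4" shows "P1 m (int n) \<noteq> 0" "P1 m (int n - 1) \<noteq> 0"
proof -
  have a: "P1 m (int n) = of_int (2 * int n + int m - 2)" by (simp add: P1_def)
  have b: "P1 m (int n - 1) = of_int (2 * int n + int m - 4)" by (simp add: P1_def)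
  show "P1 m (int n) \<noteq> 0" unfolding a of_int_eq_0_iff using assms by linarith
  show "P1 m (int n - 1) \<noteq> 0" unfolding b of_int_eq_0_iff using assms by linarith
qed

lemma lin_diagop: "lin (diagop m f)"
  by (simp add: lin_def diagop_def sc_def fun_eq_iff algebra_simps)

lemma Aop_aa: "Aop m P = pis m (aa m P)" by (simp add: Aop_def aa_def sop_def)
lemma Cop_cc: "Cop m P = pis m (cc m P)" by (simp add: Cop_def cc_def sop_def)
lemma Sx_sxo: "Sx m P = pis m (sxo m P)" by (simp add: Sx_def sxo_def sop_def)
lemma Su_suo: "Su m P = pis m (suo m P)" by (simp add: Su_def suo_def sop_def)


lemma diagop_fsum_deg:
  assumes "finite K" "\<And>k. k \<in> K \<Longrightarrow> degx m (X k) (px k)" "\<And>k. k \<in> K \<Longrightarrow> degu m (X k) (qx k)"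
  shows "diagop m f (\<Sum>k\<in>K. X k) \<alpha> \<beta> =
    (\<Sum>k\<in>K. f (- (of_int (px k) + of_nat m / 2)) (- (of_int (qx k) + of_nat m / 2)) * X k \<alpha> \<beta>)"
proof -
  have "diagop m f (\<Sum>k\<in>K. X k) \<alpha> \<beta> = (\<Sum>k\<in>K. diagop m f (X k)) \<alpha> \<beta>"
    by (simp only: lin_fsum[OF lin_diagop assms(1)])
  also have "\<dots> = (\<Sum>k\<in>K. diagop m f (X k) \<alpha> \<beta>)" by (rule fsum_apply[OF assms(1)])
  also have "\<dots> = (\<Sum>k\<in>K. f (- (of_int (px k) + of_nat m / 2)) (- (of_int (qx k) + of_nat m / 2)) * X k \<alpha> \<beta>)"
    by (rule sum.cong) (simp_all add: diagop_deg[OF assms(2,3)] sc_def)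
  finally show ?thesis .
qed

theorem lemma3p5:
  fixes m :: nat and P :: cpoly
  assumes "m > 4" and "is_poly m P" and "harm m P"
  shows "Aop m (Cop m P) =
    (\<lambda>\<alpha> \<beta>. diagop m (\<lambda>hx hu. (hx + hx * hu + hu) / ((hx + 1) * (hu + 1))) (Cop m (Aop m P)) \<alpha> \<beta>
          - diagop m (\<lambda>hx hu. hx + hu) P \<alpha> \<beta>
          + diagop m (\<lambda>hx hu. 1 / (hx + 1)) (Sx m (Su m P)) \<alpha> \<beta>
          + diagop m (\<lambda>hx hu. 1 / (hu + 1)) (Su m (Sx m P)) \<alpha> \<beta>)"
proof -
  define K where "K = (\<lambda>x. ((\<Sum>i<m. fst x i), (\<Sum>i<m. snd x i))) ` supp P"
  define Q where "Q = (\<lambda>k::nat \<times> nat. restr m (fst k) (snd k) 0 0 P)"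
  define px where "px = (\<lambda>k::nat \<times> nat. int (fst k))"
  define qx where "qx = (\<lambda>k::nat \<times> nat. int (snd k))"
  have fK: "finite K" and PQ: "P = (\<Sum>k\<in>K. Q k)"
    using restr_decomp[OF assms(2)] unfolding K_def Q_def by auto
  have Qp: "is_poly m (Q k)" "harm m (Q k)" "degx m (Q k) (px k)" "degu m (Q k) (qx k)" for k
    unfolding Q_def px_def qx_def
    by (simp_all add: is_poly_restr assms harm_restr degx_restr degu_restr)
  have nz: "P1 m (px k) \<noteq> 0" "P1 m (qx k) \<noteq> 0" "P1 m (px k - 1) \<noteq> 0" "P1 m (qx k - 1) \<noteq> 0" for k
    unfolding px_def qx_def using P1_nz[OF assms(1)] by auto

  have cop: "Cop m P = (\<Sum>k\<in>K. CF m (px k) (qx k) (Q k))"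
  proof -
    have e: "cc m P = (\<Sum>k\<in>K. cc m (Q k))" by (subst PQ, rule lin_fsum[OF lin_cc fK])
    have d: "D4 m (\<Sum>k\<in>K. cc m (Q k)) (\<Sum>k\<in>K. CF m (px k) (qx k) (Q k))"
      by (rule D4_sum[OF fK], rule D4_cc[OF Qp nz(1,2)])
    show ?thesis unfolding Cop_cc e by (rule D4_pis[OF d])
  qed
  have lhs: "Aop m (Cop m P) = (\<Sum>k\<in>K. aa m (CF m (px k) (qx k) (Q k)))"
  proof -
    have e: "aa m (Cop m P) = (\<Sum>k\<in>K. aa m (CF m (px k) (qx k) (Q k)))" unfolding cop by (rule lin_fsum[OF lin_aa fK])
    have d: "D4 m (\<Sum>k\<in>K. aa m (CF m (px k) (qx k) (Q k))) (\<Sum>k\<in>K. aa m (CF m (px k) (qx k) (Q k)))"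
      by (rule D4_sum[OF fK], rule D4_aa[OF is_poly_CF[OF Qp(1)] CF_harm[OF Qp(2,3,4) nz(1,2)]])
    show ?thesis unfolding Aop_aa e by (rule D4_pis[OF d])
  qed
  have aop: "Aop m P = (\<Sum>k\<in>K. aa m (Q k))"
  proof -
    have e: "aa m P = (\<Sum>k\<in>K. aa m (Q k))" by (subst PQ, rule lin_fsum[OF lin_aa fK])
    have d: "D4 m (\<Sum>k\<in>K. aa m (Q k)) (\<Sum>k\<in>K. aa m (Q k))"
      by (rule D4_sum[OF fK], rule D4_aa[OF Qp(1,2)])
    show ?thesis unfolding Aop_aa e by (rule D4_pis[OF d])
  qed
  have caop: "Cop m (Aop m P) = (\<Sum>k\<in>K. CF m (px k - 1) (qx k - 1) (aa m (Q k)))"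
  proof -
    have e: "cc m (Aop m P) = (\<Sum>k\<in>K. cc m (aa m (Q k)))" unfolding aop by (rule lin_fsum[OF lin_cc fK])
    have d: "D4 m (\<Sum>k\<in>K. cc m (aa m (Q k))) (\<Sum>k\<in>K. CF m (px k - 1) (qx k - 1) (aa m (Q k)))"
      by (rule D4_sum[OF fK], rule D4_cc[OF is_poly_aa[OF Qp(1)] harm_aa[OF Qp(2)] degx_aa[OF Qp(3)] degu_aa[OF Qp(4)] nz(3,4)])
    show ?thesis unfolding Cop_cc e by (rule D4_pis[OF d])
  qed
  have su: "Su m P = (\<Sum>k\<in>K. SuF m (qx k) (Q k))"
  proof -
    have e: "suo m P = (\<Sum>k\<in>K. suo m (Q k))" by (subst PQ, rule lin_fsum[OF lin_suo fK])
    have d: "D4 m (\<Sum>k\<in>K. suo m (Q k)) (\<Sum>k\<in>K. SuF m (qx k) (Q k))"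
      by (rule D4_sum[OF fK], rule D4_suo[OF Qp(1,2,4) nz(2)])
    show ?thesis unfolding Su_suo e by (rule D4_pis[OF d])
  qed
  have sx: "Sx m P = (\<Sum>k\<in>K. SxF m (px k) (Q k))"
  proof -
    have e: "sxo m P = (\<Sum>k\<in>K. sxo m (Q k))" by (subst PQ, rule lin_fsum[OF lin_sxo fK])
    have d: "D4 m (\<Sum>k\<in>K. sxo m (Q k)) (\<Sum>k\<in>K. SxF m (px k) (Q k))"
      by (rule D4_sum[OF fK], rule D4_sxo[OF Qp(1,2,3) nz(1)])
    show ?thesis unfolding Sx_sxo e by (rule D4_pis[OF d])
  qed
  have sxsu: "Sx m (Su m P) = (\<Sum>k\<in>K. SxF m (px k - 1) (SuF m (qx k) (Q k)))"
  proof -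
    have e: "sxo m (Su m P) = (\<Sum>k\<in>K. sxo m (SuF m (qx k) (Q k)))" unfolding su by (rule lin_fsum[OF lin_sxo fK])
    have d: "D4 m (\<Sum>k\<in>K. sxo m (SuF m (qx k) (Q k))) (\<Sum>k\<in>K. SxF m (px k - 1) (SuF m (qx k) (Q k)))"
      by (rule D4_sum[OF fK], rule D4_sxo[OF is_poly_SuF[OF Qp(1)] SuF_harm[OF Qp(2,4) nz(2)] degx_SuF[OF Qp(3)] nz(3)])
    show ?thesis unfolding Sx_sxo e by (rule D4_pis[OF d])
  qed
  have susx: "Su m (Sx m P) = (\<Sum>k\<in>K. SuF m (qx k - 1) (SxF m (px k) (Q k)))"
  proof -
    have e: "suo m (Sx m P) = (\<Sum>k\<in>K. suo m (SxF m (px k) (Q k)))" unfolding sx by (rule lin_fsum[OF lin_suo fK])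
    have d: "D4 m (\<Sum>k\<in>K. suo m (SxF m (px k) (Q k))) (\<Sum>k\<in>K. SuF m (qx k - 1) (SxF m (px k) (Q k)))"
      by (rule D4_sum[OF fK], rule D4_suo[OF is_poly_SxF[OF Qp(1)] SxF_harm[OF Qp(2,3) nz(1)] degu_SxF[OF Qp(4)] nz(4)])
    show ?thesis unfolding Su_suo e by (rule D4_pis[OF d])
  qed

  have d1: "degx m (CF m (px k - 1) (qx k - 1) (aa m (Q k))) (px k)"
           "degu m (CF m (px k - 1) (qx k - 1) (aa m (Q k))) (qx k)" for k
    using degx_CF[OF degx_aa[OF Qp(3)]] degu_CF[OF degu_aa[OF Qp(4)]] by simp_all
  have d2: "degx m (SxF m (px k - 1) (SuF m (qx k) (Q k))) (px k)"
           "degu m (SxF m (px k - 1) (SuF m (qx k) (Q k))) (qx k)" for k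
    using degx_SxF[OF degx_SuF[OF Qp(3)]] degu_SxF[OF degu_SuF[OF Qp(4)]] by simp_all
  have d3: "degx m (SuF m (qx k - 1) (SxF m (px k) (Q k))) (px k)"
           "degu m (SuF m (qx k - 1) (SxF m (px k) (Q k))) (qx k)" for k
    using degx_SuF[OF degx_SxF[OF Qp(3)]] degu_SuF[OF degu_SxF[OF Qp(4)]] by simp_all

  show ?thesis
  proof (rule ext, rule ext)
    fix \<alpha> \<beta> :: "nat \<Rightarrow> nat"
    define hx where "hx k = - (of_int (px k) + of_nat m / 2 :: complex)" for k
    define hu where "hu k = - (of_int (qx k) + of_nat m / 2 :: complex)" for k
    have r1: "diagop m (\<lambda>hx hu. (hx + hx * hu + hu) / ((hx + 1) * (hu + 1))) (Cop m (Aop m P)) \<alpha> \<beta> =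
      (\<Sum>k\<in>K. (hx k + hx k * hu k + hu k) / ((hx k + 1) * (hu k + 1)) * CF m (px k - 1) (qx k - 1) (aa m (Q k)) \<alpha> \<beta>)"
      unfolding caop hx_def hu_def by (rule diagop_fsum_deg[OF fK d1])
    have r2: "diagop m (\<lambda>hx hu. hx + hu) P \<alpha> \<beta> = (\<Sum>k\<in>K. (hx k + hu k) * Q k \<alpha> \<beta>)"
      unfolding hx_def hu_def by (subst PQ, rule diagop_fsum_deg[OF fK Qp(3,4)])
    have r3: "diagop m (\<lambda>hx hu. 1 / (hx + 1)) (Sx m (Su m P)) \<alpha> \<beta> =
      (\<Sum>k\<in>K. 1 / (hx k + 1) * SxF m (px k - 1) (SuF m (qx k) (Q k)) \<alpha> \<beta>)"
      unfolding sxsu hx_def hu_def by (rule diagop_fsum_deg[OF fK d2])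
    have r4: "diagop m (\<lambda>hx hu. 1 / (hu + 1)) (Su m (Sx m P)) \<alpha> \<beta> =
      (\<Sum>k\<in>K. 1 / (hu k + 1) * SuF m (qx k - 1) (SxF m (px k) (Q k)) \<alpha> \<beta>)"
      unfolding susx hx_def hu_def by (rule diagop_fsum_deg[OF fK d3])
    have l: "Aop m (Cop m P) \<alpha> \<beta> = (\<Sum>k\<in>K. aa m (CF m (px k) (qx k) (Q k)) \<alpha> \<beta>)"
      unfolding lhs by (rule fsum_apply[OF fK])
    have mi: "aa m (CF m (px k) (qx k) (Q k)) \<alpha> \<beta> =
       (hx k + hx k * hu k + hu k) / ((hx k + 1) * (hu k + 1)) * CF m (px k - 1) (qx k - 1) (aa m (Q k)) \<alpha> \<beta>
       - (hx k + hu k) * Q k \<alpha> \<beta> + 1 / (hx k + 1) * SxF m (px k - 1) (SuF m (qx k) (Q k)) \<alpha> \<beta>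
       + 1 / (hu k + 1) * SuF m (qx k - 1) (SxF m (px k) (Q k)) \<alpha> \<beta>" for k
      unfolding hx_def hu_def main_id[OF Qp(2,3,4) nz] by (simp add: sc_def)
    show "Aop m (Cop m P) \<alpha> \<beta> = diagop m (\<lambda>hx hu. (hx + hx * hu + hu) / ((hx + 1) * (hu + 1))) (Cop m (Aop m P)) \<alpha> \<beta>
          - diagop m (\<lambda>hx hu. hx + hu) P \<alpha> \<beta>
          + diagop m (\<lambda>hx hu. 1 / (hx + 1)) (Sx m (Su m P)) \<alpha> \<beta>
          + diagop m (\<lambda>hx hu. 1 / (hu + 1)) (Su m (Sx m P)) \<alpha> \<beta>"
    proof -
      have "Aop m (Cop m P) \<alpha> \<beta> = (\<Sum>k\<in>K.
       (hx k + hx k * hu k + hu k) / ((hx k + 1) * (hu k + 1)) * CF m (px k - 1) (qx k - 1) (aa m (Q k)) \<alpha> \<beta>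
       - (hx k + hu k) * Q k \<alpha> \<beta> + 1 / (hx k + 1) * SxF m (px k - 1) (SuF m (qx k) (Q k)) \<alpha> \<beta>
       + 1 / (hu k + 1) * SuF m (qx k - 1) (SxF m (px k) (Q k)) \<alpha> \<beta>)"
        unfolding l by (rule sum.cong[OF refl mi])
      also have "\<dots> = (\<Sum>k\<in>K. (hx k + hx k * hu k + hu k) / ((hx k + 1) * (hu k + 1)) * CF m (px k - 1) (qx k - 1) (aa m (Q k)) \<alpha> \<beta>)
        - (\<Sum>k\<in>K. (hx k + hu k) * Q k \<alpha> \<beta>) + (\<Sum>k\<in>K. 1 / (hx k + 1) * SxF m (px k - 1) (SuF m (qx k) (Q k)) \<alpha> \<beta>)
        + (\<Sum>k\<in>K. 1 / (hu k + 1) * SuF m (qx k - 1) (SxF m (px k) (Q k)) \<alpha> \<beta>)"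
        by (simp only: sum.distrib sum_subtractf)
      finally show ?thesis by (simp only: r1 r2 r3 r4)
    qed
  qed
qed


end
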